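(* Let $H$ be the space of continuous $1$-periodic real functions with mean zero, and let $\Phi:H\to[0,\infty)$ be the functional defined below. Then $\Phi$ is bounded and continuous with respect to the $L^\infty$ norm; in particular, for all $\tilde q,\tilde q_1,\tilde q_2\in H$, \[ |\Phi(\tilde q)|\le\|\tilde q\|_{L^\infty},\qquad |\Phi(\tilde q_1)-\Phi(\tilde q_2)|\le\|\tilde q_1-\tilde q_2\|_{L^\infty}. \]
   Context: For $\tilde q\in H$, let $\psi>0$ be the positive $1$-periodic ground state eigenfunction of $-\frac{d^2}{dx^2}+\tilde q$ with periodic boundary conditions and $\tilde p=\psi'/\psi$; then $\tilde p$ is $1$-periodic, $\int_0^1\tilde p=0$, and $\tilde q=\tilde p'+\tilde p^2-\int_0^1\tilde p^2$. Define $\Phi(\tilde q)=\int_0^1\tilde p(x)^2\,dx$. *)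

theory Defs
  imports "HOL-Analysis.Analysis"
begin

definition periodic1 :: "(real \<Rightarrow> real) \<Rightarrow> bool" where
  "periodic1 f \<longleftrightarrow> (\<forall>x. f (x + 1) = f x)"

definition H :: "(real \<Rightarrow> real) set" where
  "H = {q. continuous_on UNIV q \<and> periodic1 q \<and> integral {0..1} q = 0}"

definition periodic_eigenfun :: "(real \<Rightarrow> real) \<Rightarrow> real \<Rightarrow> (real \<Rightarrow> real) \<Rightarrow> bool" where
  "periodic_eigenfun q lam phi \<longleftrightarrow>
     (\<forall>x. phi differentiable at x) \<and> (\<forall>x. deriv phi differentiable at x) \<and>
     periodic1 phi \<and>
     (\<forall>x. - deriv (deriv phi) x + q x * phi x = lam * phi x)"

definition periodic_eigenvalue :: "(real \<Rightarrow> real) \<Rightarrow> real \<Rightarrow> bool" where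
  "periodic_eigenvalue q lam \<longleftrightarrow> (\<exists>phi. (\<exists>x. phi x \<noteq> 0) \<and> periodic_eigenfun q lam phi)"

definition ground_state :: "(real \<Rightarrow> real) \<Rightarrow> (real \<Rightarrow> real) \<Rightarrow> bool" where
  "ground_state q psi \<longleftrightarrow>
     (\<exists>lam. periodic_eigenfun q lam psi \<and> (\<forall>mu. periodic_eigenvalue q mu \<longrightarrow> lam \<le> mu)) \<and>
     (\<forall>x. psi x > 0)"

text \<open>Phi(q) = int_0^1 p^2 with p = psi'/psi (independent of the scaling of psi).\<close>
definition Phi :: "(real \<Rightarrow> real) \<Rightarrow> real" where
  "Phi q = (let psi = (SOME psi. ground_state q psi)
            in integral {0..1} (\<lambda>x. (deriv psi x / psi x)^2))"

text \<open>L-infinity norm (sup norm; equals the essential sup for continuous functions).\<close>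
definition Linf :: "(real \<Rightarrow> real) \<Rightarrow> real" where
  "Linf f = (SUP x\<in>UNIV. \<bar>f x\<bar>)"

end

theory Submission
  imports Defs
begin

lemma per_nat: "periodic1 f \<Longrightarrow> f (x + real n) = f x"
proof (induction n arbitrary: x)
  case (Suc n) then show ?case unfolding periodic1_def
    by (metis add.commute add.left_commute of_nat_Suc)
qed simp

lemma per_int: assumes "periodic1 f" shows "f (x + real_of_int n) = f x"
proof (cases "n \<ge> 0")
  case True then show ?thesis using per_nat[OF assms, of x "nat n"] by simp
next
  case False
  have "f (x + real_of_int n + real (nat (-n))) = f (x + real_of_int n)" using per_nat[OF assms] by blast
  then show ?thesis using False by simp
qed

lemma per_frac: assumes "periodic1 f" shows "f x = f (x - real_of_int \<lfloor>x\<rfloor>)"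
  using per_int[OF assms, of x "- \<lfloor>x\<rfloor>"] by simp

lemma CP_bounded: assumes "continuous_on UNIV f" "periodic1 f" shows "\<exists>B. \<forall>x. \<bar>f x\<bar> \<le> B"
proof -
  have "compact (f ` {0..1})" by (rule compact_continuous_image) (auto intro: continuous_on_subset[OF assms(1)])
  then obtain B where B: "\<And>y. y \<in> f ` {0..1} \<Longrightarrow> norm y \<le> B" using compact_imp_bounded bounded_iff by metis
  have "\<bar>f x\<bar> \<le> B" for x
  proof -
    have "x - real_of_int \<lfloor>x\<rfloor> \<in> {0..1}" using frac_lt_1[of x] frac_ge_0[of x] by (auto simp: frac_def)
    then have "norm (f (x - real_of_int \<lfloor>x\<rfloor>)) \<le> B" using B by blast
    then show ?thesis using per_frac[OF assms(2), of x] by simp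
  qed
  then show ?thesis by blast
qed

lemma Ideriv: assumes "continuous_on UNIV h" "c < y"
  shows "((\<lambda>y. integral {c..y} h) has_real_derivative h y) (at y)"
proof -
  have "((\<lambda>y. integral {c..y} h) has_real_derivative h y) (at y within {c..y+1})"
    by (rule integral_has_real_derivative[OF continuous_on_subset[OF assms(1) subset_UNIV]]) (use assms in simp)
  moreover have "y \<in> interior {c..y+1}" using assms by auto
  ultimately show ?thesis using at_within_interior[of y "{c..y+1}"] by simp
qed

lemma slide_deriv: assumes "continuous_on UNIV h"
  shows "((\<lambda>x. integral {x-1..x} h) has_real_derivative (h x - h (x-1))) (at x)"
proof -
  define c where "c = x - 2"
  define I where "I = (\<lambda>y. integral {c..y} h)"
  have d1: "(I has_real_derivative h x) (at x)" unfolding I_def by (rule Ideriv[OF assms]) (simp add: c_def)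
  have d2: "((\<lambda>x. I (x - 1)) has_real_derivative h (x-1)) (at x)"
  proof -
    have "(I has_real_derivative h (x-1)) (at (x-1))" unfolding I_def by (rule Ideriv[OF assms]) (simp add: c_def)
    moreover have "((\<lambda>x. x - 1) has_real_derivative 1) (at x)" by (auto intro!: derivative_eq_intros)
    ultimately have "((\<lambda>x. I (x - 1)) has_real_derivative h (x-1) * 1) (at x)" by (rule DERIV_chain2[where f=I and g="\<lambda>x. x - 1"])
    then show ?thesis by simp
  qed
  have "((\<lambda>x. I x - I (x-1)) has_real_derivative (h x - h (x-1))) (at x)"
    using d1 d2 by (rule DERIV_diff)
  then show ?thesis
  proof (rule has_field_derivative_transform_within_open[where S="{c+1<..}"])
    fix y assume "y \<in> {c+1<..}"
    have "c \<le> y - 1" using \<open>y \<in> {c+1<..}\<close> by simp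
    moreover have "y - 1 \<le> y" by simp
    moreover have "h integrable_on {c..y}" by (rule integrable_continuous_interval) (rule continuous_on_subset[OF assms], simp)
    ultimately have "integral {c..y-1} h + integral {y-1..y} h = integral {c..y} h"
      by (rule Henstock_Kurzweil_Integration.integral_combine)
    then show "I y - I (y-1) = integral {y-1..y} h" unfolding I_def by simp
  qed (auto simp: c_def)
qed

lemma ftc_UNIV: assumes "\<And>x. (F has_real_derivative F' x) (at x)" "a \<le> b"
  shows "(F' has_integral (F b - F a)) {a..b}"
  by (rule fundamental_theorem_of_calculus[OF assms(2)])
     (metis assms(1) has_field_derivative_at_within has_real_derivative_iff_has_vector_derivative)

lemma slide_const: assumes "continuous_on UNIV h" "periodic1 h"
  shows "integral {x-1..x} h = integral {0..1} h"
proof -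
  have "\<forall>x. ((\<lambda>x. integral {x-1..x} h) has_real_derivative 0) (at x)"
  proof -
    { fix x
    have "h (x - 1) = h x" using assms(2) unfolding periodic1_def by (metis diff_add_cancel)
    then have "((\<lambda>x. integral {x-1..x} h) has_real_derivative 0) (at x)" using slide_deriv[OF assms(1), of x] by simp }
    then show ?thesis by blast
  qed
  from DERIV_isconst_all[OF this, of x 1] show ?thesis by simp
qed

definition c1 :: "real \<Rightarrow> real" where "c1 a = 1 / (2 * a * (exp a - 1))"
definition c2 :: "real \<Rightarrow> real" where "c2 a = 1 / (2 * a * (1 - exp (- a)))"
definition J1 :: "real \<Rightarrow> (real \<Rightarrow> real) \<Rightarrow> real \<Rightarrow> real" where
  "J1 a f x = integral {x-1..x} (\<lambda>s. exp (- a * s) * f s)"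
definition J2 :: "real \<Rightarrow> (real \<Rightarrow> real) \<Rightarrow> real \<Rightarrow> real" where
  "J2 a f x = integral {x-1..x} (\<lambda>s. exp (a * s) * f s)"
definition Gr :: "real \<Rightarrow> (real \<Rightarrow> real) \<Rightarrow> real \<Rightarrow> real" where
  "Gr a f x = c1 a * exp (a * x) * J1 a f x + c2 a * exp (- a * x) * J2 a f x"
definition Gd :: "real \<Rightarrow> (real \<Rightarrow> real) \<Rightarrow> real \<Rightarrow> real" where
  "Gd a f x = a * c1 a * exp (a * x) * J1 a f x - a * c2 a * exp (- a * x) * J2 a f x"

lemma c_facts: assumes "a > 0"
  shows "c1 a > 0" "c2 a > 0" "c1 a * (1 - exp a) = - 1 / (2 * a)" "c2 a * (1 - exp (- a)) = 1 / (2 * a)"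
proof -
  have e1: "exp a > 1" using assms by simp
  have e2: "exp (- a) < 1" using assms by simp
  show "c1 a > 0" using e1 assms by (simp add: c1_def)
  show "c2 a > 0" using e2 assms by (simp add: c2_def)
  show "c1 a * (1 - exp a) = - 1 / (2 * a)" using e1 assms by (simp add: c1_def field_simps)
  show "c2 a * (1 - exp (- a)) = 1 / (2 * a)" using e2 assms by (simp add: c2_def field_simps)
qed

lemma cont_exp_lin: "continuous_on UNIV (\<lambda>s::real. exp (b * s))"
  by (intro continuous_intros)

lemma cont_mult_exp: "continuous_on UNIV (f::real\<Rightarrow>real) \<Longrightarrow> continuous_on UNIV (\<lambda>s. exp (b * s) * f s)"
  by (intro continuous_on_mult cont_exp_lin)

lemma J_derivs: assumes "continuous_on UNIV f" "periodic1 f"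
  shows "(J1 a f has_real_derivative exp (- a * x) * f x * (1 - exp a)) (at x)"
        "(J2 a f has_real_derivative exp (a * x) * f x * (1 - exp (- a))) (at x)"
proof -
  have p: "f (x - 1) = f x" using assms(2) unfolding periodic1_def by (metis diff_add_cancel)
  have e1: "exp (- a * (x - 1)) = exp (- a * x) * exp a" by (simp add: algebra_simps flip: exp_add)
  have e2: "exp (a * (x - 1)) = exp (a * x) * exp (- a)" by (simp add: algebra_simps flip: exp_add)
  have "(J1 a f has_real_derivative exp (- a * x) * f x - exp (- a * (x-1)) * f (x-1)) (at x)"
    unfolding J1_def[abs_def] using slide_deriv[OF cont_mult_exp[OF assms(1), of "-a"], of x] by simp
  moreover have "exp (- a * x) * f x - exp (- a * (x-1)) * f (x-1) = exp (- a * x) * f x * (1 - exp a)"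
    unfolding p e1 by (simp add: algebra_simps)
  ultimately show "(J1 a f has_real_derivative exp (- a * x) * f x * (1 - exp a)) (at x)"
    by metis
  have "(J2 a f has_real_derivative exp (a * x) * f x - exp (a * (x-1)) * f (x-1)) (at x)"
    unfolding J2_def[abs_def] using slide_deriv[OF cont_mult_exp[OF assms(1), of "a"], of x] by simp
  moreover have "exp (a * x) * f x - exp (a * (x-1)) * f (x-1) = exp (a * x) * f x * (1 - exp (- a))"
    unfolding p e2 by (simp add: algebra_simps)
  ultimately show "(J2 a f has_real_derivative exp (a * x) * f x * (1 - exp (- a))) (at x)"
    by metis
qed

lemma Gr_deriv: assumes "a > 0" "continuous_on UNIV f" "periodic1 f"
  shows "(Gr a f has_real_derivative Gd a f x) (at x)"
proof -
  define D1 where "D1 = exp (- a * x) * f x * (1 - exp a)"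
  define D2 where "D2 = exp (a * x) * f x * (1 - exp (- a))"
  have d: "(J1 a f has_real_derivative D1) (at x)" "(J2 a f has_real_derivative D2) (at x)"
    unfolding D1_def D2_def by (rule J_derivs[OF assms(2,3)])+
  have "((\<lambda>x. c1 a * exp (a * x) * J1 a f x + c2 a * exp (- a * x) * J2 a f x) has_real_derivative
     c1 a * (exp (a * x) * a) * J1 a f x + c1 a * exp (a * x) * D1
   + (c2 a * (exp (- a * x) * (- a)) * J2 a f x + c2 a * exp (- a * x) * D2)) (at x)"
    by (intro derivative_eq_intros d) (auto intro: d)
  moreover have "exp (a * x) * exp (- a * x) = 1" by (simp flip: exp_add)
  ultimately have "(Gr a f has_real_derivative
     a * c1 a * exp (a * x) * J1 a f x - a * c2 a * exp (- a * x) * J2 a f x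
     + f x * (c1 a * (1 - exp a) + c2 a * (1 - exp (- a)))) (at x)"
    unfolding Gr_def[abs_def] D1_def D2_def by (simp add: algebra_simps)
  then show ?thesis unfolding Gd_def using c_facts[OF assms(1)] by simp
qed

lemma Gd_deriv: assumes "a > 0" "continuous_on UNIV f" "periodic1 f"
  shows "(Gd a f has_real_derivative a^2 * Gr a f x - f x) (at x)"
proof -
  define D1 where "D1 = exp (- a * x) * f x * (1 - exp a)"
  define D2 where "D2 = exp (a * x) * f x * (1 - exp (- a))"
  have d: "(J1 a f has_real_derivative D1) (at x)" "(J2 a f has_real_derivative D2) (at x)"
    unfolding D1_def D2_def by (rule J_derivs[OF assms(2,3)])+
  have "((\<lambda>x. a * c1 a * exp (a * x) * J1 a f x - a * c2 a * exp (- a * x) * J2 a f x) has_real_derivative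
     a * c1 a * (exp (a * x) * a) * J1 a f x + a * c1 a * exp (a * x) * D1
   - (a * c2 a * (exp (- a * x) * (- a)) * J2 a f x + a * c2 a * exp (- a * x) * D2)) (at x)"
    by (intro derivative_eq_intros d) (auto intro: d)
  moreover have "exp (a * x) * exp (- a * x) = 1" by (simp flip: exp_add)
  ultimately have "(Gd a f has_real_derivative
     a^2 * (c1 a * exp (a * x) * J1 a f x + c2 a * exp (- a * x) * J2 a f x)
     + a * f x * (c1 a * (1 - exp a) - c2 a * (1 - exp (- a)))) (at x)"
    unfolding Gd_def[abs_def] D1_def D2_def by (simp add: algebra_simps power2_eq_square)
  then show ?thesis unfolding Gr_def using c_facts[OF assms(1)] assms(1) by simp
qed

lemma intg: "continuous_on UNIV (g::real\<Rightarrow>real) \<Longrightarrow> g integrable_on {a..b}"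
  by (rule integrable_continuous_interval) (rule continuous_on_subset, assumption, simp)

lemma J1_shift: assumes "periodic1 f" shows "J1 a f (x + 1) = exp (- a) * J1 a f x"
proof -
  have "J1 a f (x + 1) = integral {x..x+1} (\<lambda>s. exp (- a * s) * f s)" unfolding J1_def by simp
  also have "\<dots> = integral {x-1..x+1-1} (\<lambda>t. exp (- a * (t + 1)) * f (t + 1))"
    using integral_shift_real_ivl[of x 1 "x+1" "\<lambda>s. exp (- a * s) * f s"] by simp
  also have "\<dots> = integral {x-1..x} (\<lambda>t. exp (- a) * (exp (- a * t) * f t))"
  proof -
    have "exp (- a * (t + 1)) * f (t + 1) = exp (- a) * (exp (- a * t) * f t)" for t
    proof -
      have ft: "f (t + 1) = f t" using assms unfolding periodic1_def by blast
      show ?thesis unfolding ft by (simp add: algebra_simps flip: exp_add)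
    qed
    then show ?thesis by simp
  qed
  also have "\<dots> = exp (- a) * J1 a f x" unfolding J1_def by simp
  finally show ?thesis .
qed

lemma J2_shift: assumes "periodic1 f" shows "J2 a f (x + 1) = exp a * J2 a f x"
proof -
  have "J2 a f (x + 1) = integral {x..x+1} (\<lambda>s. exp (a * s) * f s)" unfolding J2_def by simp
  also have "\<dots> = integral {x-1..x+1-1} (\<lambda>t. exp (a * (t + 1)) * f (t + 1))"
    using integral_shift_real_ivl[of x 1 "x+1" "\<lambda>s. exp (a * s) * f s"] by simp
  also have "\<dots> = integral {x-1..x} (\<lambda>t. exp a * (exp (a * t) * f t))"
  proof -
    have "exp (a * (t + 1)) * f (t + 1) = exp a * (exp (a * t) * f t)" for t
    proof -
      have ft: "f (t + 1) = f t" using assms unfolding periodic1_def by blast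
      show ?thesis unfolding ft by (simp add: algebra_simps flip: exp_add)
    qed
    then show ?thesis by simp
  qed
  also have "\<dots> = exp a * J2 a f x" unfolding J2_def by simp
  finally show ?thesis .
qed

lemma Gr_periodic: assumes "periodic1 f" shows "Gr a f (x + 1) = Gr a f x"
proof -
  have e1: "exp (a * (x + 1)) * exp (- a) = exp (a * x)" by (simp add: algebra_simps flip: exp_add)
  have e2: "exp (- a * (x + 1)) * exp a = exp (- a * x)" by (simp add: algebra_simps flip: exp_add)
  have "Gr a f (x + 1) = c1 a * (exp (a * (x + 1)) * exp (- a)) * J1 a f x + c2 a * (exp (- a * (x + 1)) * exp a) * J2 a f x"
    unfolding Gr_def J1_shift[OF assms] J2_shift[OF assms] by (simp only: mult.assoc)
  also have "\<dots> = Gr a f x" unfolding e1 e2 Gr_def ..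
  finally show ?thesis .
qed

lemma Gr_kernel: assumes "continuous_on UNIV f"
  shows "Gr a f x = integral {x-1..x} (\<lambda>s. (c1 a * exp (a * (x - s)) + c2 a * exp (- a * (x - s))) * f s)"
proof -
  have i1: "(\<lambda>s. c1 a * exp (a * x) * (exp (- a * s) * f s)) integrable_on {x-1..x}"
    by (intro intg continuous_on_mult continuous_on_const cont_mult_exp assms)
  have i2: "(\<lambda>s. c2 a * exp (- a * x) * (exp (a * s) * f s)) integrable_on {x-1..x}"
    by (intro intg continuous_on_mult continuous_on_const cont_mult_exp assms)
  have "Gr a f x = integral {x-1..x} (\<lambda>s. c1 a * exp (a * x) * (exp (- a * s) * f s))
                + integral {x-1..x} (\<lambda>s. c2 a * exp (- a * x) * (exp (a * s) * f s))"
    unfolding Gr_def J1_def J2_def by simp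
  also have "\<dots> = integral {x-1..x} (\<lambda>s. c1 a * exp (a * x) * (exp (- a * s) * f s) + c2 a * exp (- a * x) * (exp (a * s) * f s))"
    by (rule Henstock_Kurzweil_Integration.integral_add[OF i1 i2, symmetric])
  also have "\<dots> = integral {x-1..x} (\<lambda>s. (c1 a * exp (a * (x - s)) + c2 a * exp (- a * (x - s))) * f s)"
  proof -
    have "c1 a * exp (a * x) * (exp (- a * s) * f s) + c2 a * exp (- a * x) * (exp (a * s) * f s)
        = (c1 a * exp (a * (x - s)) + c2 a * exp (- a * (x - s))) * f s" for s
    proof -
      have q1: "exp (a * x) * exp (- a * s) = exp (a * (x - s))" by (simp add: algebra_simps flip: exp_add)
      have q2: "exp (- a * x) * exp (a * s) = exp (- a * (x - s))" by (simp add: algebra_simps flip: exp_add)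
      show ?thesis unfolding q1[symmetric] q2[symmetric] by (simp add: algebra_simps)
    qed
    then show ?thesis by simp
  qed
  finally show ?thesis .
qed

lemma kernel_bounds: assumes "a > 0" "0 \<le> t" "t \<le> 1"
  shows "c2 a * exp (- a) \<le> c1 a * exp (a * t) + c2 a * exp (- a * t)"
        "c1 a * exp (a * t) + c2 a * exp (- a * t) \<le> c1 a * exp a + c2 a"
proof -
  note c = c_facts[OF assms(1)]
  have "exp (- a) \<le> exp (- a * t)" using assms by (simp add: mult_left_le)
  then have "c2 a * exp (- a) \<le> c2 a * exp (- a * t)" using c by simp
  moreover have "0 \<le> c1 a * exp (a * t)" using c by simp
  ultimately show "c2 a * exp (- a) \<le> c1 a * exp (a * t) + c2 a * exp (- a * t)" by linarith
  have "exp (a * t) \<le> exp a" using assms by (simp add: mult_left_le)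
  then have "c1 a * exp (a * t) \<le> c1 a * exp a" using c by simp
  moreover have "exp (- a * t) \<le> 1" using assms by simp
  then have "c2 a * exp (- a * t) \<le> c2 a" using c by simp
  ultimately show "c1 a * exp (a * t) + c2 a * exp (- a * t) \<le> c1 a * exp a + c2 a" by linarith
qed

lemma Gr_bounds: assumes "a > 0" "continuous_on UNIV f" "\<And>s. f s \<ge> 0"
  shows "c2 a * exp (- a) * integral {x-1..x} f \<le> Gr a f x"
        "Gr a f x \<le> (c1 a * exp a + c2 a) * integral {x-1..x} f"
proof -
  have ik: "(\<lambda>s. (c1 a * exp (a * (x - s)) + c2 a * exp (- a * (x - s))) * f s) integrable_on {x-1..x}"
    by (intro intg continuous_intros assms(2))
  have if1: "(\<lambda>s. K * f s) integrable_on {x-1..x}" for K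
    by (intro intg continuous_intros assms(2))
  show "c2 a * exp (- a) * integral {x-1..x} f \<le> Gr a f x"
    unfolding Gr_kernel[OF assms(2)] Henstock_Kurzweil_Integration.integral_mult_right[symmetric]
    by (rule integral_le[OF if1 ik]) (use kernel_bounds[OF assms(1)] assms(3) in \<open>auto intro!: mult_right_mono\<close>)
  show "Gr a f x \<le> (c1 a * exp a + c2 a) * integral {x-1..x} f"
    unfolding Gr_kernel[OF assms(2)] Henstock_Kurzweil_Integration.integral_mult_right[symmetric]
    by (rule integral_le[OF ik if1]) (use kernel_bounds[OF assms(1)] assms(3) in \<open>auto intro!: mult_right_mono\<close>)
qed

lemma Gr_mono: assumes "continuous_on UNIV f" "continuous_on UNIV g" "\<And>s. f s \<le> g s" "a > 0"
  shows "Gr a f x \<le> Gr a g x"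
  unfolding Gr_kernel[OF assms(1)] Gr_kernel[OF assms(2)]
  by (rule integral_le) (auto intro!: intg continuous_intros assms(1,2) mult_left_mono assms(3)
     add_nonneg_nonneg mult_nonneg_nonneg exp_ge_zero less_imp_le[OF c_facts(1)[OF assms(4)]] less_imp_le[OF c_facts(2)[OF assms(4)]])

lemma geo_small: assumes "0 \<le> (\<theta>::real)" "\<theta> < 1" "(e::real) > 0"
  shows "\<exists>N. \<forall>n\<ge>N. C * \<theta> ^ n < e"
proof -
  have "(\<lambda>n. C * \<theta> ^ n) \<longlonglongrightarrow> C * 0"
    by (intro tendsto_mult tendsto_const LIMSEQ_power_zero) (use assms in simp)
  then have "\<forall>\<^sub>F n in sequentially. C * \<theta> ^ n < e" using assms(3) by (simp add: order_tendstoD(2))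
  then show ?thesis by (simp add: eventually_sequentially)
qed

lemma small_zero: assumes "0 \<le> \<theta>" "\<theta> < 1" "\<And>n. \<bar>d\<bar> \<le> C * \<theta> ^ n"
  shows "d = (0::real)"
proof (rule ccontr)
  assume "d \<noteq> 0"
  then have "\<bar>d\<bar> > 0" by simp
  from geo_small[OF assms(1,2) this, of C] obtain N where "\<forall>n\<ge>N. C * \<theta> ^ n < \<bar>d\<bar>" by blast
  then have "C * \<theta> ^ N < \<bar>d\<bar>" by blast
  with assms(3)[of N] show False by linarith
qed

lemma ulim:
  fixes F :: "nat \<Rightarrow> real \<Rightarrow> real"
  assumes cont: "\<And>n. continuous_on UNIV (F n)"
    and inc: "\<And>n x. \<bar>F (Suc n) x - F n x\<bar> \<le> B * \<theta> ^ n" and th: "0 \<le> \<theta>" "\<theta> < 1"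
  shows "\<exists>u. continuous_on UNIV u \<and> (\<forall>n x. \<bar>u x - F n x\<bar> \<le> B * \<theta> ^ n / (1 - \<theta>))"
proof -
  define d where "d x k = F (Suc k) x - F k x" for x k
  have sg: "summable (\<lambda>k. B * \<theta> ^ k)" by (intro summable_mult summable_geometric) (use th in simp)
  have sd: "summable (d x)" for x
    by (rule summable_comparison_test[OF _ sg]) (use inc in \<open>auto simp: d_def\<close>)
  define u where "u x = F 0 x + suminf (d x)" for x
  have Fn: "F n x = F 0 x + (\<Sum>k<n. d x k)" for n x
    unfolding d_def using sum_lessThan_telescope[of "\<lambda>k. F k x" n] by simp
  have bnd: "\<bar>u x - F n x\<bar> \<le> B * \<theta> ^ n / (1 - \<theta>)" for n x
  proof -
    have "u x - F n x = (\<Sum>k. d x (k + n))"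
      unfolding u_def Fn[of n x] using suminf_minus_initial_segment[OF sd[of x], of n] by simp
    also have "\<bar>\<dots>\<bar> \<le> (\<Sum>k. B * \<theta> ^ n * \<theta> ^ k)"
    proof -
      have "norm (\<Sum>k. d x (k + n)) \<le> (\<Sum>k. B * \<theta> ^ n * \<theta> ^ k)"
      proof (rule norm_suminf_le)
        fix k
        show "norm (d x (k + n)) \<le> B * \<theta> ^ n * \<theta> ^ k"
          using inc[of "k + n" x] by (simp add: d_def power_add mult_ac)
        show "summable (\<lambda>k. B * \<theta> ^ n * \<theta> ^ k)"
          by (rule summable_mult, rule summable_geometric) (use th in simp)
      qed
      then show ?thesis by simp
    qed
    also have "\<dots> = B * \<theta> ^ n / (1 - \<theta>)"
      using suminf_mult[OF summable_geometric[of \<theta>], of "B * \<theta> ^ n"] suminf_geometric[of \<theta>] th by simp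
    finally show ?thesis .
  qed
  have "uniform_limit UNIV F u sequentially"
  proof (rule uniform_limitI)
    fix e :: real assume "e > 0"
    then have "e * (1 - \<theta>) > 0" using th by simp
    from geo_small[OF th this, of B] obtain N where N: "\<forall>n\<ge>N. B * \<theta> ^ n < e * (1 - \<theta>)" by blast
    have "\<forall>x\<in>UNIV. dist (F n x) (u x) < e" if "n \<ge> N" for n
    proof
      fix x
      have "B * \<theta> ^ n / (1 - \<theta>) < e" using N that th by (simp add: divide_less_eq)
      then show "dist (F n x) (u x) < e" using bnd[of x n] by (simp add: dist_real_def abs_minus_commute)
    qed
    then show "\<forall>\<^sub>F n in sequentially. \<forall>x\<in>UNIV. dist (F n x) (u x) < e"
      by (auto simp: eventually_sequentially)
  qed
  then have "continuous_on UNIV u"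
    by (rule uniform_limit_theorem[rotated]) (use cont in auto)
  with bnd show ?thesis by blast
qed

definition CP :: "(real \<Rightarrow> real) \<Rightarrow> bool" where
  "CP f \<longleftrightarrow> continuous_on UNIV f \<and> periodic1 f"

lemma contraction_fix:
  assumes TCP: "\<And>u. CP u \<Longrightarrow> CP (T u)"
    and Tc: "\<And>u w B. CP u \<Longrightarrow> CP w \<Longrightarrow> (\<forall>x. \<bar>u x - w x\<bar> \<le> B) \<Longrightarrow> \<forall>x. \<bar>T u x - T w x\<bar> \<le> \<theta> * B"
    and th: "0 \<le> \<theta>" "\<theta> < 1"
  shows "\<exists>u. CP u \<and> T u = u"
proof -
  define F where "F n = (T ^^ n) (\<lambda>_. 0)" for n
  have FCP: "CP (F n)" for n
  proof (induction n)
    case 0 show ?case by (simp add: F_def CP_def periodic1_def)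
  next
    case (Suc n)
    have "F (Suc n) = T (F n)" by (simp add: F_def)
    then show ?case using TCP[OF Suc] by simp
  qed
  have FS: "F (Suc n) = T (F n)" for n by (simp add: F_def)
  obtain B where B: "\<forall>x. \<bar>F 1 x - F 0 x\<bar> \<le> B"
    using CP_bounded[of "\<lambda>x. F 1 x - F 0 x"] FCP[of 1] FCP[of 0]
    by (auto simp: CP_def periodic1_def intro: continuous_on_diff)
  have inc: "\<bar>F (Suc n) x - F n x\<bar> \<le> B * \<theta> ^ n" for n x
  proof (induction n arbitrary: x)
    case 0 then show ?case using B by simp
  next
    case (Suc n)
    have "\<forall>x. \<bar>T (F (Suc n)) x - T (F n) x\<bar> \<le> \<theta> * (B * \<theta> ^ n)"
      by (rule Tc[OF FCP FCP]) (use Suc in blast)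
    then show ?case unfolding FS[of "Suc n"] FS[of n] by (simp add: mult_ac)
  qed
  obtain u where uc: "continuous_on UNIV u" and ub: "\<forall>n x. \<bar>u x - F n x\<bar> \<le> B * \<theta> ^ n / (1 - \<theta>)"
    using ulim[of F B \<theta>, OF _ inc th] FCP unfolding CP_def by blast
  have up: "periodic1 u" unfolding periodic1_def
  proof
    fix x
    have "\<bar>u (x + 1) - u x\<bar> \<le> (2 * B / (1 - \<theta>)) * \<theta> ^ n" for n
    proof -
      have "F n (x + 1) = F n x" using FCP[of n] by (simp add: CP_def periodic1_def)
      then have "\<bar>u (x + 1) - u x\<bar> \<le> 2 * (B * \<theta> ^ n / (1 - \<theta>))"
        using ub[rule_format, of "x+1" n] ub[rule_format, of x n] by arith
      also have "\<dots> = (2 * B / (1 - \<theta>)) * \<theta> ^ n" by simp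
      finally show ?thesis .
    qed
    then have "u (x + 1) - u x = 0" by (rule small_zero[OF th])
    then show "u (x + 1) = u x" by simp
  qed
  have ucp: "CP u" using uc up by (simp add: CP_def)
  have "T u = u"
  proof
    fix x
    have "\<bar>T u x - u x\<bar> \<le> (2 * B / (1 - \<theta>)) * \<theta> ^ n" for n
    proof -
      have "\<forall>x. \<bar>T u x - T (F n) x\<bar> \<le> \<theta> * (B * \<theta> ^ n / (1 - \<theta>))"
        by (rule Tc[OF ucp FCP]) (use ub in blast)
      then have a: "\<bar>T u x - F (Suc n) x\<bar> \<le> B * \<theta> ^ Suc n / (1 - \<theta>)" unfolding FS by (simp add: mult_ac)
      have b: "\<bar>u x - F (Suc n) x\<bar> \<le> B * \<theta> ^ Suc n / (1 - \<theta>)" using ub by blast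
      have "B * \<theta> ^ Suc n / (1 - \<theta>) \<le> B * \<theta> ^ n / (1 - \<theta>)"
      proof -
        have "B \<ge> 0" using inc[of 0 0] by simp
        moreover have "\<theta> * \<theta> ^ n \<le> \<theta> ^ n" using th by (simp add: mult_left_le_one_le)
        ultimately have "B * \<theta> ^ Suc n \<le> B * \<theta> ^ n" by (simp add: mult_left_mono)
        then show ?thesis using th by (simp add: divide_right_mono)
      qed
      then have "\<bar>T u x - u x\<bar> \<le> 2 * (B * \<theta> ^ n / (1 - \<theta>))" using a b by arith
      also have "\<dots> = (2 * B / (1 - \<theta>)) * \<theta> ^ n" by simp
      finally show ?thesis .
    qed
    then have "T u x - u x = 0" by (rule small_zero[OF th])
    then show "T u x = u x" by simp
  qed
  with ucp show ?thesis by blast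
qed

lemma Gr_lin: assumes "continuous_on UNIV f" "continuous_on UNIV g"
  shows "Gr a (\<lambda>s. \<alpha> * f s + \<beta> * g s) x = \<alpha> * Gr a f x + \<beta> * Gr a g x"
proof -
  define k where "k s = c1 a * exp (a * (x - s)) + c2 a * exp (- a * (x - s))" for s
  have kc: "continuous_on UNIV k" unfolding k_def by (intro continuous_intros)
  have i1: "(\<lambda>s. \<alpha> * (k s * f s)) integrable_on {x-1..x}" by (intro intg continuous_intros kc assms)
  have i2: "(\<lambda>s. \<beta> * (k s * g s)) integrable_on {x-1..x}" by (intro intg continuous_intros kc assms)
  have cl: "continuous_on UNIV (\<lambda>s. \<alpha> * f s + \<beta> * g s)" by (intro continuous_intros assms)
  have "Gr a (\<lambda>s. \<alpha> * f s + \<beta> * g s) x = integral {x-1..x} (\<lambda>s. \<alpha> * (k s * f s) + \<beta> * (k s * g s))"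
    unfolding Gr_kernel[OF cl] k_def by (simp add: algebra_simps)
  also have "\<dots> = integral {x-1..x} (\<lambda>s. \<alpha> * (k s * f s)) + integral {x-1..x} (\<lambda>s. \<beta> * (k s * g s))"
    by (rule Henstock_Kurzweil_Integration.integral_add[OF i1 i2])
  also have "\<dots> = \<alpha> * Gr a f x + \<beta> * Gr a g x"
    unfolding Gr_kernel[OF assms(1)] Gr_kernel[OF assms(2)] k_def by simp
  finally show ?thesis .
qed

lemma J1_const: assumes "a > 0" shows "J1 a (\<lambda>_. B) x = B * exp (- a * x) * (exp a - 1) / a"
proof -
  define F where "F s = - B * exp (- a * s) / a" for s
  have "((\<lambda>s. exp (- a * s) * B) has_integral (F x - F (x - 1))) {x-1..x}"
  proof (rule ftc_UNIV)
    fix s show "(F has_real_derivative exp (- a * s) * B) (at s)"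
      unfolding F_def using assms by (auto intro!: derivative_eq_intros simp: field_simps)
  qed simp
  then have "J1 a (\<lambda>_. B) x = F x - F (x - 1)" unfolding J1_def by (rule integral_unique)
  also have "\<dots> = B * exp (- a * x) * (exp a - 1) / a"
  proof -
    have "exp (- a * (x - 1)) = exp (- a * x) * exp a" by (simp add: algebra_simps flip: exp_add)
    then show ?thesis unfolding F_def using assms by (simp add: field_simps)
  qed
  finally show ?thesis .
qed

lemma J2_const: assumes "a > 0" shows "J2 a (\<lambda>_. B) x = B * exp (a * x) * (1 - exp (- a)) / a"
proof -
  define F where "F s = B * exp (a * s) / a" for s
  have "((\<lambda>s. exp (a * s) * B) has_integral (F x - F (x - 1))) {x-1..x}"
  proof (rule ftc_UNIV)
    fix s show "(F has_real_derivative exp (a * s) * B) (at s)"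
      unfolding F_def using assms by (auto intro!: derivative_eq_intros simp: field_simps)
  qed simp
  then have "J2 a (\<lambda>_. B) x = F x - F (x - 1)" unfolding J2_def by (rule integral_unique)
  also have "\<dots> = B * exp (a * x) * (1 - exp (- a)) / a"
  proof -
    have "exp (a * (x - 1)) = exp (a * x) * exp (- a)" by (simp add: algebra_simps flip: exp_add)
    then show ?thesis unfolding F_def using assms by (simp add: field_simps)
  qed
  finally show ?thesis .
qed

lemma Gr_const: assumes "a > 0" shows "Gr a (\<lambda>_. B) x = B / a^2"
proof -
  have e: "exp (a * x) * exp (- a * x) = 1" by (simp flip: exp_add)
  have "Gr a (\<lambda>_. B) x = (B / a) * (c1 a * (exp a - 1)) * (exp (a * x) * exp (- a * x))
      + (B / a) * (c2 a * (1 - exp (- a))) * (exp (a * x) * exp (- a * x))"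
    unfolding Gr_def J1_const[OF assms] J2_const[OF assms] by (simp add: field_simps)
  also have "\<dots> = B / a^2"
  proof -
    have h1: "c1 a * (exp a - 1) = 1 / (2 * a)" using c_facts(3)[OF assms] by (simp add: algebra_simps)
    have h2: "c2 a * (1 - exp (- a)) = 1 / (2 * a)" using c_facts(4)[OF assms] .
    show ?thesis unfolding e h1 h2 using assms by (simp add: field_simps power2_eq_square)
  qed
  finally show ?thesis .
qed

lemma Gr_abs: assumes "a > 0" "continuous_on UNIV f" "\<And>s. \<bar>f s\<bar> \<le> B"
  shows "\<bar>Gr a f x\<bar> \<le> B / a^2"
proof -
  have fb: "f s \<le> B" "- B \<le> f s" for s using assms(3)[of s] by (auto simp: abs_le_iff)
  have "Gr a f x \<le> Gr a (\<lambda>_. B) x"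
    by (rule Gr_mono[OF assms(2) _ _ assms(1)]) (use fb in auto)
  moreover have "Gr a (\<lambda>_. - B) x \<le> Gr a f x"
    by (rule Gr_mono[OF _ assms(2) _ assms(1)]) (use fb in auto)
  ultimately show ?thesis unfolding Gr_const[OF assms(1)] by (simp add: abs_le_iff)
qed

lemma Gr_CP: assumes "a > 0" "CP h" shows "CP (Gr a h)"
proof -
  have "\<And>x. (Gr a h has_real_derivative Gd a h x) (at x)"
    using Gr_deriv[OF assms(1)] assms(2) unfolding CP_def by blast
  then have "continuous_on UNIV (Gr a h)"
    by (meson DERIV_isCont continuous_at_imp_continuous_on)
  moreover have "periodic1 (Gr a h)" using Gr_periodic assms(2) unfolding CP_def periodic1_def by blast
  ultimately show ?thesis by (simp add: CP_def)
qed

lemma int_pos: fixes f :: "real \<Rightarrow> real" assumes "continuous_on UNIV f" "\<And>s. f s > 0" shows "integral {0..1} f > 0"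
proof -
  have "compact {0..1::real}" "{0..1::real} \<noteq> {}" "continuous_on {0..1} f"
    using continuous_on_subset[OF assms(1)] by auto
  from continuous_attains_inf[OF this]
  obtain m where m: "m \<in> {0..1}" "\<forall>y\<in>{0..1}. f m \<le> f y" by auto
  have "integral {0..1::real} (\<lambda>_. f m) \<le> integral {0..1} f"
    by (rule Henstock_Kurzweil_Integration.integral_le[OF intg[OF continuous_on_const] intg[OF assms(1)]]) (use m in auto)
  moreover have "integral {0..1::real} (\<lambda>_. f m) = f m" by simp
  ultimately show ?thesis using assms(2)[of m] by linarith
qed

lemma small_le: assumes "0 \<le> \<theta>" "\<theta> < 1" "C \<ge> 0" "\<And>n. d \<le> C * \<theta> ^ n"
  shows "d \<le> (0::real)"
proof -
  have "\<bar>max d 0\<bar> \<le> C * \<theta> ^ n" for n using assms(4)[of n] assms(1,3) by (simp add: max_def)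
  then have "max d 0 = 0" by (rule small_zero[OF assms(1,2)])
  then show ?thesis by (simp add: max_def split: if_splits)
qed

lemma CP_add: "CP f \<Longrightarrow> CP g \<Longrightarrow> CP (\<lambda>s. f s + g s)"
  unfolding CP_def periodic1_def by (auto intro: continuous_on_add)
lemma CP_mult: "CP f \<Longrightarrow> CP g \<Longrightarrow> CP (\<lambda>s. f s * g s)"
  unfolding CP_def periodic1_def by (auto intro: continuous_on_mult)
lemma CP_const: "CP (\<lambda>_. c)"
  unfolding CP_def periodic1_def by auto
lemma CP_lin: "CP f \<Longrightarrow> CP g \<Longrightarrow> CP (\<lambda>s. \<alpha> * f s + \<beta> * g s)"
  by (intro CP_add CP_mult CP_const)
lemma CP_diff: "CP f \<Longrightarrow> CP g \<Longrightarrow> CP (\<lambda>s. f s - g s)"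
  unfolding CP_def periodic1_def by (auto intro: continuous_on_diff)

locale pot =
  fixes q :: "real \<Rightarrow> real" and Q :: real
  assumes qcp: "CP q" and qb: "\<And>x. \<bar>q x\<bar> \<le> Q"
begin

definition Am where "Am = 2 * Q + 2"
definition aa where "aa = sqrt Am"
definition V where "V s = Q + 1 - q s"
definition th where "th = (2 * Q + 1) / (2 * Q + 2)"
definition T where "T f u = Gr aa (\<lambda>s. f s + V s * u s)"
definition K where "K f = (SOME u. CP u \<and> T f u = u)"
definition R where "R = (c1 aa * exp aa + c2 aa) / (c2 aa * exp (- aa))"

lemma Q0: "Q \<ge> 0" using qb[of 0] by simp
lemma Am_pos: "Am > 0" using Q0 by (simp add: Am_def)
lemma aa_pos: "aa > 0" using Am_pos by (simp add: aa_def)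
lemma aa2: "aa ^ 2 = Am" using Am_pos by (simp add: aa_def)
lemma V_CP: "CP V"
proof -
  have "V = (\<lambda>s. (Q + 1) + (- 1) * q s)" by (auto simp: V_def)
  then show ?thesis by (simp only:) (rule CP_add[OF CP_const CP_mult[OF CP_const qcp]])
qed
lemma V_lo: "1 \<le> V s" using qb[of s] by (simp add: V_def abs_le_iff)
lemma V_hi: "V s \<le> 2 * Q + 1" using qb[of s] by (simp add: V_def abs_le_iff)
lemma th_ge: "0 \<le> th" using Q0 by (simp add: th_def)
lemma th_lt: "th < 1" using Q0 by (simp add: th_def)
lemma th_eq: "(2 * Q + 1) / Am = th" by (simp add: th_def Am_def)

lemma T_CP: "CP f \<Longrightarrow> CP u \<Longrightarrow> CP (T f u)"
  unfolding T_def by (intro Gr_CP aa_pos CP_add CP_mult V_CP)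

lemma T_diff: assumes "CP f" "CP u" "CP w"
  shows "T f u x - T f w x = Gr aa (\<lambda>s. V s * (u s - w s)) x"
proof -
  have c1: "continuous_on UNIV (\<lambda>s. f s + V s * u s)" using CP_add[OF assms(1) CP_mult[OF V_CP assms(2)]] by (simp add: CP_def)
  have c2: "continuous_on UNIV (\<lambda>s. f s + V s * w s)" using CP_add[OF assms(1) CP_mult[OF V_CP assms(3)]] by (simp add: CP_def)
  have "Gr aa (\<lambda>s. 1 * (f s + V s * u s) + (- 1) * (f s + V s * w s)) x = 1 * T f u x + (- 1) * T f w x"
    unfolding T_def by (rule Gr_lin[OF c1 c2])
  moreover have "(\<lambda>s. 1 * (f s + V s * u s) + (- 1) * (f s + V s * w s)) = (\<lambda>s. V s * (u s - w s))"
    by (auto simp: algebra_simps)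
  ultimately show ?thesis by simp
qed

lemma T_contr: assumes "CP f" "CP u" "CP w" "\<forall>x. \<bar>u x - w x\<bar> \<le> B"
  shows "\<forall>x. \<bar>T f u x - T f w x\<bar> \<le> th * B"
proof
  fix x
  have B0: "B \<ge> 0" using assms(4) by (meson abs_ge_zero order.trans)
  have c: "continuous_on UNIV (\<lambda>s. V s * (u s - w s))"
    using CP_mult[OF V_CP CP_diff[OF assms(2,3)]] by (simp add: CP_def)
  have b: "\<bar>V s * (u s - w s)\<bar> \<le> (2 * Q + 1) * B" for s
  proof -
    have "\<bar>V s * (u s - w s)\<bar> = V s * \<bar>u s - w s\<bar>" using V_lo[of s] by (simp add: abs_mult)
    also have "\<dots> \<le> (2 * Q + 1) * B" using V_hi[of s] V_lo[of s] assms(4) B0 by (intro mult_mono) auto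
    finally show ?thesis .
  qed
  have "\<bar>T f u x - T f w x\<bar> \<le> (2 * Q + 1) * B / aa ^ 2"
    unfolding T_diff[OF assms(1-3)] by (rule Gr_abs[OF aa_pos c b])
  also have "\<dots> = th * B" unfolding aa2 th_eq[symmetric] by simp
  finally show "\<bar>T f u x - T f w x\<bar> \<le> th * B" .
qed

lemma K_fix: assumes "CP f" shows "CP (K f)" "T f (K f) = K f"
proof -
  have "\<exists>u. CP u \<and> T f u = u"
    by (rule contraction_fix[OF T_CP[OF assms] T_contr[OF assms] th_ge th_lt])
  then have "CP (K f) \<and> T f (K f) = K f" unfolding K_def by (rule someI_ex)
  then show "CP (K f)" "T f (K f) = K f" by auto
qed

lemma fix_unique: assumes "CP f" "CP u" "T f u = u" shows "u = K f"
proof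
  fix x
  obtain B where B: "\<forall>x. \<bar>u x - K f x\<bar> \<le> B"
    using CP_bounded[of "\<lambda>x. u x - K f x"] CP_diff[OF assms(2) K_fix(1)[OF assms(1)]] by (auto simp: CP_def)
  have "\<forall>x. \<bar>u x - K f x\<bar> \<le> B * th ^ n" for n
  proof (induction n)
    case 0 then show ?case using B by simp
  next
    case (Suc n)
    from T_contr[OF assms(1,2) K_fix(1)[OF assms(1)] Suc] show ?case
      unfolding assms(3) K_fix(2)[OF assms(1)] by (simp add: mult_ac)
  qed
  then have "u x - K f x = 0" using small_zero[OF th_ge th_lt] by blast
  then show "u x = K f x" by simp
qed

lemma K_lin: assumes "CP f" "CP g"
  shows "K (\<lambda>s. \<alpha> * f s + \<beta> * g s) = (\<lambda>x. \<alpha> * K f x + \<beta> * K g x)"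
proof (rule fix_unique[symmetric])
  show "CP (\<lambda>s. \<alpha> * f s + \<beta> * g s)" by (rule CP_lin[OF assms])
  show "CP (\<lambda>x. \<alpha> * K f x + \<beta> * K g x)" by (rule CP_lin[OF K_fix(1)[OF assms(1)] K_fix(1)[OF assms(2)]])
  show "T (\<lambda>s. \<alpha> * f s + \<beta> * g s) (\<lambda>x. \<alpha> * K f x + \<beta> * K g x) = (\<lambda>x. \<alpha> * K f x + \<beta> * K g x)"
  proof
    fix x
    have c1: "continuous_on UNIV (\<lambda>s. f s + V s * K f s)"
      using CP_add[OF assms(1) CP_mult[OF V_CP K_fix(1)[OF assms(1)]]] by (simp add: CP_def)
    have c2: "continuous_on UNIV (\<lambda>s. g s + V s * K g s)"
      using CP_add[OF assms(2) CP_mult[OF V_CP K_fix(1)[OF assms(2)]]] by (simp add: CP_def)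
    have "(\<lambda>s. \<alpha> * f s + \<beta> * g s + V s * (\<alpha> * K f s + \<beta> * K g s))
        = (\<lambda>s. \<alpha> * (f s + V s * K f s) + \<beta> * (g s + V s * K g s))" by (auto simp: algebra_simps)
    then have "T (\<lambda>s. \<alpha> * f s + \<beta> * g s) (\<lambda>x. \<alpha> * K f x + \<beta> * K g x) x
        = \<alpha> * T f (K f) x + \<beta> * T g (K g) x"
      unfolding T_def using Gr_lin[OF c1 c2] by simp
    then show "T (\<lambda>s. \<alpha> * f s + \<beta> * g s) (\<lambda>x. \<alpha> * K f x + \<beta> * K g x) x = \<alpha> * K f x + \<beta> * K g x"
      unfolding K_fix(2)[OF assms(1)] K_fix(2)[OF assms(2)] .
  qed
qed

lemma K_nonneg: assumes "CP f" "\<And>s. f s \<ge> 0" shows "K f x \<ge> 0"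
proof -
  define u where "u = K f"
  have ucp: "CP u" and ufix: "T f u = u" using K_fix[OF assms(1)] by (auto simp: u_def)
  define w where "w x = max (u x) 0" for x
  have wcp: "CP w" using ucp unfolding CP_def periodic1_def w_def
    by (auto intro!: continuous_on_max continuous_on_const)
  have Tw: "T f w y \<ge> 0" for y
  proof -
    have "Gr aa (\<lambda>_. 0) y \<le> T f w y" unfolding T_def
    proof (rule Gr_mono[OF continuous_on_const _ _ aa_pos])
      show "continuous_on UNIV (\<lambda>s. f s + V s * w s)"
        using CP_add[OF assms(1) CP_mult[OF V_CP wcp]] by (simp add: CP_def)
      fix s show "0 \<le> f s + V s * w s" using assms(2)[of s] V_lo[of s] by (simp add: w_def)
    qed
    then show ?thesis using Gr_const[OF aa_pos, of 0] by simp
  qed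
  define ng where "ng x = max (- u x) 0" for x
  have step: "\<forall>x. ng x \<le> th * B" if "\<forall>x. ng x \<le> B" for B
  proof
    fix x
    have "\<bar>u y - w y\<bar> = ng y" for y by (simp add: ng_def w_def max_def)
    then have "\<forall>x. \<bar>u x - w x\<bar> \<le> B" using that by simp
    from T_contr[OF assms(1) ucp wcp this] have "\<bar>u x - T f w x\<bar> \<le> th * B" using ufix by simp
    moreover have "B \<ge> 0" using that[rule_format, of x] by (simp add: ng_def)
    ultimately show "ng x \<le> th * B" using Tw[of x] th_ge by (auto simp: ng_def max_def)
  qed
  obtain B where B: "\<forall>x. \<bar>u x\<bar> \<le> B" using CP_bounded ucp unfolding CP_def by blast
  have "\<forall>x. ng x \<le> B * th ^ n" for n
  proof (induction n)
    case 0 show ?case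
    proof
      fix x show "ng x \<le> B * th ^ 0" using B[rule_format, of x] by (simp add: ng_def abs_le_iff)
    qed
  next
    case (Suc n)
    from step[OF Suc] have "\<forall>x. ng x \<le> th * (B * th ^ n)" .
    then show ?case by (simp add: mult_ac)
  qed
  moreover have "B \<ge> 0" using B by (meson abs_ge_zero order.trans)
  ultimately have "ng x \<le> 0" using small_le[OF th_ge th_lt] by blast
  then show ?thesis by (simp add: ng_def u_def)
qed

end

lemma ulim_CP:
  fixes F :: "nat \<Rightarrow> real \<Rightarrow> real"
  assumes cp: "\<And>n. CP (F n)"
    and inc: "\<And>n x. \<bar>F (Suc n) x - F n x\<bar> \<le> B * \<theta> ^ n" and th: "0 \<le> \<theta>" "\<theta> < 1"
  shows "\<exists>u. CP u \<and> (\<forall>n x. \<bar>u x - F n x\<bar> \<le> B * \<theta> ^ n / (1 - \<theta>))"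
proof -
  obtain u where uc: "continuous_on UNIV u" and ub: "\<forall>n x. \<bar>u x - F n x\<bar> \<le> B * \<theta> ^ n / (1 - \<theta>)"
    using ulim[of F B \<theta>, OF _ inc th] cp unfolding CP_def by blast
  have up: "periodic1 u" unfolding periodic1_def
  proof
    fix x
    have "\<bar>u (x + 1) - u x\<bar> \<le> (2 * B / (1 - \<theta>)) * \<theta> ^ n" for n
    proof -
      have "F n (x + 1) = F n x" using cp[of n] by (simp add: CP_def periodic1_def)
      then have "\<bar>u (x + 1) - u x\<bar> \<le> 2 * (B * \<theta> ^ n / (1 - \<theta>))"
        using ub[rule_format, of "x+1" n] ub[rule_format, of x n] by arith
      also have "\<dots> = (2 * B / (1 - \<theta>)) * \<theta> ^ n" by simp
      finally show ?thesis .
    qed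
    then have "u (x + 1) - u x = 0" by (rule small_zero[OF th])
    then show "u (x + 1) = u x" by simp
  qed
  show ?thesis using uc up ub by (auto simp: CP_def)
qed

context pot begin

lemma K_bound: assumes "CP f" "\<And>s. \<bar>f s\<bar> \<le> B" shows "\<bar>K f x\<bar> \<le> B"
proof -
  define u where "u = K f"
  have ucp: "CP u" and ufix: "T f u = u" using K_fix[OF assms(1)] by (auto simp: u_def)
  obtain C0 where C0: "\<forall>x. \<bar>u x\<bar> \<le> C0" using CP_bounded ucp unfolding CP_def by blast
  have C00: "C0 \<ge> 0" using C0 by (meson abs_ge_zero order.trans)
  have B0: "B \<ge> 0" using assms(2)[of 0] by simp
  have ind: "\<forall>x. \<bar>u x\<bar> \<le> B + C0 * th ^ n" for n
  proof (induction n)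
    case 0 show ?case
    proof
      fix x show "\<bar>u x\<bar> \<le> B + C0 * th ^ 0" using C0[rule_format, of x] B0 by simp
    qed
  next
    case (Suc n)
    show ?case
    proof
      fix x
      have cc: "continuous_on UNIV (\<lambda>s. f s + V s * u s)"
        using CP_add[OF assms(1) CP_mult[OF V_CP ucp]] by (simp add: CP_def)
      have bb: "\<bar>f s + V s * u s\<bar> \<le> B + (2 * Q + 1) * (B + C0 * th ^ n)" for s
      proof -
        have "\<bar>V s * u s\<bar> = V s * \<bar>u s\<bar>" using V_lo[of s] by (simp add: abs_mult)
        also have "\<dots> \<le> (2 * Q + 1) * (B + C0 * th ^ n)"
          using V_hi[of s] V_lo[of s] Suc[rule_format, of s] by (intro mult_mono) auto
        finally show ?thesis using assms(2)[of s] by linarith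
      qed
      have "\<bar>u x\<bar> = \<bar>T f u x\<bar>" using ufix by simp
      also have "\<dots> \<le> (B + (2 * Q + 1) * (B + C0 * th ^ n)) / aa ^ 2"
        unfolding T_def by (rule Gr_abs[OF aa_pos cc bb])
      also have "\<dots> = B * (2 * Q + 2) / Am + ((2 * Q + 1) / Am) * (C0 * th ^ n)"
        unfolding aa2 using Am_pos by (simp add: field_simps)
      also have "\<dots> = B + C0 * th ^ Suc n"
        unfolding th_eq using Am_pos by (simp add: Am_def)
      finally show "\<bar>u x\<bar> \<le> B + C0 * th ^ Suc n" .
    qed
  qed
  have "\<bar>u x\<bar> - B \<le> 0"
  proof (rule small_le[OF th_ge th_lt C00])
    fix n show "\<bar>u x\<bar> - B \<le> C0 * th ^ n" using ind[of n] by (simp add: algebra_simps)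
  qed
  then show ?thesis by (simp add: u_def)
qed

lemma kmin_pos: "c2 aa * exp (- aa) > 0" using c_facts(2)[OF aa_pos] by simp

lemma R_ge1: "R \<ge> 1"
proof -
  have "c2 aa * exp (- aa) \<le> c1 aa * exp aa + c2 aa"
    using kernel_bounds(1,2)[OF aa_pos, of 0] by simp
  then show ?thesis using kmin_pos unfolding R_def by simp
qed

lemma K_h: assumes "CP f" "\<And>s. f s \<ge> 0"
  shows "CP (\<lambda>s. f s + V s * K f s)" "\<And>s. f s + V s * K f s \<ge> f s"
        "K f = Gr aa (\<lambda>s. f s + V s * K f s)"
proof -
  show "CP (\<lambda>s. f s + V s * K f s)" by (intro CP_add CP_mult V_CP K_fix(1)[OF assms(1)] assms(1))
  show "f s + V s * K f s \<ge> f s" for s using V_lo[of s] K_nonneg[OF assms] by simp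
  show "K f = Gr aa (\<lambda>s. f s + V s * K f s)" using K_fix(2)[OF assms(1)] unfolding T_def by simp
qed

lemma K_ratio: assumes "CP f" "\<And>s. f s \<ge> 0" shows "K f x \<le> R * K f y"
proof -
  define h where "h s = f s + V s * K f s" for s
  have hcp: "CP h" and hge: "\<And>s. h s \<ge> f s" and Kh: "K f = Gr aa h" using K_h[OF assms] by (auto simp: h_def[abs_def])
  have hc: "continuous_on UNIV h" and hp: "periodic1 h" using hcp by (auto simp: CP_def)
  have h0: "h s \<ge> 0" for s using hge[of s] assms(2)[of s] by linarith
  define I where "I = integral {0..1} h"
  have I0: "I \<ge> 0" unfolding I_def by (rule integral_nonneg[OF intg[OF hc]]) (use h0 in auto)
  have up: "K f x \<le> (c1 aa * exp aa + c2 aa) * I"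
    using Gr_bounds(2)[OF aa_pos hc h0, of x] slide_const[OF hc hp, of x] Kh by (simp add: I_def)
  have lo: "c2 aa * exp (- aa) * I \<le> K f y"
    using Gr_bounds(1)[OF aa_pos hc h0, of y] slide_const[OF hc hp, of y] Kh by (simp add: I_def)
  have "(c1 aa * exp aa + c2 aa) * I = R * (c2 aa * exp (- aa) * I)"
    unfolding R_def using kmin_pos c_facts(2)[OF aa_pos] by (simp add: field_simps)
  also have "\<dots> \<le> R * K f y" using lo R_ge1 by (simp add: mult_left_mono)
  finally show ?thesis using up by linarith
qed

lemma K_pos: assumes "CP f" "\<And>s. f s > 0" shows "K f x > 0"
proof -
  have f0: "\<And>s. f s \<ge> 0" using assms(2) less_imp_le by blast
  define h where "h s = f s + V s * K f s" for s
  have hcp: "CP h" and hge: "\<And>s. h s \<ge> f s" and Kh: "K f = Gr aa h" using K_h[OF assms(1) f0] by (auto simp: h_def[abs_def])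
  have hc: "continuous_on UNIV h" and hp: "periodic1 h" using hcp by (auto simp: CP_def)
  have hpos: "h s > 0" for s using hge[of s] assms(2)[of s] by linarith
  have h0: "h s \<ge> 0" for s using hpos[of s] by simp
  have lo: "c2 aa * exp (- aa) * integral {0..1} h \<le> K f x"
    using Gr_bounds(1)[OF aa_pos hc h0, of x] slide_const[OF hc hp, of x] Kh by simp
  moreover have "c2 aa * exp (- aa) * integral {0..1} h > 0"
    using kmin_pos int_pos[OF hc hpos] by simp
  ultimately show ?thesis by linarith
qed

lemma K_deriv: assumes "CP f"
  shows "(K f has_real_derivative Gd aa (\<lambda>s. f s + V s * K f s) x) (at x)"
        "(Gd aa (\<lambda>s. f s + V s * K f s) has_real_derivative ((Q + 1 + q x) * K f x - f x)) (at x)"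
proof -
  have hcp: "CP (\<lambda>s. f s + V s * K f s)" by (intro CP_add CP_mult V_CP K_fix(1)[OF assms(1)] assms(1))
  then have hc: "continuous_on UNIV (\<lambda>s. f s + V s * K f s)" and hp: "periodic1 (\<lambda>s. f s + V s * K f s)"
    by (auto simp: CP_def)
  have Kh: "K f = Gr aa (\<lambda>s. f s + V s * K f s)" using K_fix(2)[OF assms(1)] unfolding T_def by simp
  show "(K f has_real_derivative Gd aa (\<lambda>s. f s + V s * K f s) x) (at x)"
    by (subst Kh) (rule Gr_deriv[OF aa_pos hc hp])
  have "(Gd aa (\<lambda>s. f s + V s * K f s) has_real_derivative aa ^ 2 * Gr aa (\<lambda>s. f s + V s * K f s) x - (f x + V x * K f x)) (at x)"
    by (rule Gd_deriv[OF aa_pos hc hp])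
  moreover have "aa ^ 2 * Gr aa (\<lambda>s. f s + V s * K f s) x - (f x + V x * K f x) = (Q + 1 + q x) * K f x - f x"
    unfolding aa2 Kh[symmetric] by (simp add: Am_def V_def algebra_simps)
  ultimately show "(Gd aa (\<lambda>s. f s + V s * K f s) has_real_derivative ((Q + 1 + q x) * K f x - f x)) (at x)"
    by simp
qed

definition eps where "eps = 1 - 1 / R^2"

lemma eps_ge: "0 \<le> eps" and eps_lt: "eps < 1"
proof -
  have "R^2 \<ge> 1" using R_ge1 by (simp add: one_le_power)
  then show "0 \<le> eps" unfolding eps_def by (simp add: divide_le_eq_1)
  show "eps < 1" unfolding eps_def using R_ge1 by simp
qed

lemma osc: assumes "CP f" "CP g" "\<And>s. g s > 0" "\<And>s. a * g s \<le> f s" "\<And>s. f s \<le> b * g s"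
  shows "a \<le> K f x / K g x" "K f x / K g x \<le> b" "K f x / K g x - K f y / K g y \<le> eps * (b - a)"
proof -
  have g0: "\<And>s. g s \<ge> 0" using assms(3) less_imp_le by blast
  have Kgp: "\<And>z. K g z > 0" by (rule K_pos[OF assms(2,3)])
  have cu: "CP (\<lambda>s. 1 * f s + (- a) * g s)" by (rule CP_lin[OF assms(1,2)])
  have cv: "CP (\<lambda>s. b * g s + (- 1) * f s)" by (rule CP_lin[OF assms(2,1)])
  have u0: "\<And>s. 1 * f s + (- a) * g s \<ge> 0" using assms(4) by (simp add: algebra_simps)
  have v0: "\<And>s. b * g s + (- 1) * f s \<ge> 0" using assms(5) by (simp add: algebra_simps)
  have Ku: "K (\<lambda>s. 1 * f s + (- a) * g s) z = K f z - a * K g z" for z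
    using K_lin[OF assms(1,2), of 1 "- a"] by simp
  have Kv: "K (\<lambda>s. b * g s + (- 1) * f s) z = b * K g z - K f z" for z
    using K_lin[OF assms(2,1), of b "- 1"] by simp
  have ua: "K f z - a * K g z \<ge> 0" for z using K_nonneg[OF cu u0, of z] Ku by simp
  have vb: "b * K g z - K f z \<ge> 0" for z using K_nonneg[OF cv v0, of z] Kv by simp
  show "a \<le> K f x / K g x" using ua[of x] Kgp[of x] by (simp add: le_divide_eq)
  show "K f x / K g x \<le> b" using vb[of x] Kgp[of x] by (simp add: divide_le_eq)
  have vr: "b * K g y - K f y \<le> R * (b * K g x - K f x)"
    using K_ratio[OF cv v0, of y x] Kv by simp
  have gr: "K g x \<le> R * K g y" using K_ratio[OF assms(2) g0] by simp
  define rx where "rx = K f x / K g x"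
  define ry where "ry = K f y / K g y"
  have tx: "b - rx = (b * K g x - K f x) / K g x" unfolding rx_def using Kgp[of x] by (simp add: field_simps)
  have ty: "b - ry = (b * K g y - K f y) / K g y" unfolding ry_def using Kgp[of y] by (simp add: field_simps)
  have "b - ry \<le> R^2 * (b - rx)"
  proof -
    have "(b * K g y - K f y) / K g y \<le> R * (b * K g x - K f x) / K g y"
      using vr Kgp[of y] by (simp add: divide_right_mono)
    also have "\<dots> \<le> R * (b * K g x - K f x) / (K g x / R)"
    proof (rule divide_left_mono)
      show "K g x / R \<le> K g y" using gr R_ge1 by (simp add: divide_le_eq mult.commute)
      show "0 \<le> R * (b * K g x - K f x)" using R_ge1 vb[of x] by simp
      show "0 < K g y * (K g x / R)" using Kgp[of x] Kgp[of y] R_ge1 by simp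
    qed
    also have "\<dots> = R^2 * ((b * K g x - K f x) / K g x)" using R_ge1 Kgp[of x] by (simp add: field_simps power2_eq_square)
    finally show ?thesis unfolding tx ty .
  qed
  then have "(b - ry) / R^2 \<le> b - rx" using R_ge1 by (simp add: divide_le_eq mult.commute)
  then have "rx - ry \<le> (b - ry) * eps" unfolding eps_def by (simp add: algebra_simps)
  also have "\<dots> \<le> (b - a) * eps"
  proof -
    have "a \<le> ry" unfolding ry_def using ua[of y] Kgp[of y] by (simp add: le_divide_eq)
    then show ?thesis using eps_ge by (simp add: mult_right_mono)
  qed
  finally show "K f x / K g x - K f y / K g y \<le> eps * (b - a)" unfolding rx_def ry_def by (simp add: mult.commute)
qed

end

context pot begin

lemma K_scale: assumes "CP f" shows "K (\<lambda>s. c * f s) = (\<lambda>x. c * K f x)"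
  using K_lin[OF assms assms, of c 0] by simp

definition hh where "hh n = (K ^^ n) (\<lambda>_. 1)"

lemma hh_Suc: "hh (Suc n) = K (hh n)" by (simp add: hh_def)

lemma hh_CP: "CP (hh n)"
proof (induction n)
  case 0 show ?case by (simp add: hh_def CP_const)
next
  case (Suc n) show ?case unfolding hh_Suc by (rule K_fix(1)[OF Suc])
qed

lemma hh_pos: "hh n x > 0"
proof (induction n arbitrary: x)
  case 0 show ?case by (simp add: hh_def)
next
  case (Suc n) show ?case unfolding hh_Suc by (rule K_pos[OF hh_CP Suc])
qed

lemma hh_ratio: "hh n x \<le> R * hh n y"
proof (cases n)
  case 0 then show ?thesis using R_ge1 by (simp add: hh_def)
next
  case (Suc m)
  have "\<And>s. hh m s \<ge> 0" using hh_pos[of m] less_imp_le by blast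
  from K_ratio[OF hh_CP this] show ?thesis unfolding Suc hh_Suc .
qed

definition rho where "rho n x = hh (Suc n) x / hh n x"

lemma rho_CP: "CP (rho n)"
proof -
  have c1: "continuous_on UNIV (hh n)" and c2: "continuous_on UNIV (hh (Suc n))"
    using hh_CP[of n] hh_CP[of "Suc n"] by (auto simp: CP_def)
  have nz: "\<forall>x\<in>UNIV. hh n x \<noteq> 0" using hh_pos[of n] by (metis less_irrefl)
  have "continuous_on UNIV (rho n)" unfolding rho_def[abs_def]
    by (rule continuous_on_divide[OF c2 c1 nz])
  moreover have "periodic1 (rho n)" using hh_CP[of n] hh_CP[of "Suc n"] by (simp add: CP_def periodic1_def rho_def)
  ultimately show ?thesis by (simp add: CP_def)
qed

definition mlo where "mlo n = (INF x. rho n x)"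
definition mhi where "mhi n = (SUP x. rho n x)"

lemma rho_bdd: "bdd_below (range (rho n))" "bdd_above (range (rho n))"
proof -
  obtain B where B: "\<forall>x. \<bar>rho n x\<bar> \<le> B" using CP_bounded rho_CP unfolding CP_def by blast
  show "bdd_below (range (rho n))"
  proof (rule bdd_belowI[where m="- B"])
    fix y assume "y \<in> range (rho n)"
    then obtain x where "y = rho n x" by blast
    then show "- B \<le> y" using B[rule_format, of x] by (simp add: abs_le_iff)
  qed
  show "bdd_above (range (rho n))"
  proof (rule bdd_aboveI[where M="B"])
    fix y assume "y \<in> range (rho n)"
    then obtain x where "y = rho n x" by blast
    then show "y \<le> B" using B[rule_format, of x] by (simp add: abs_le_iff)
  qed
qed

lemma mlo_le: "mlo n \<le> rho n x" unfolding mlo_def by (rule cINF_lower[OF rho_bdd(1)]) simp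
lemma mhi_ge: "rho n x \<le> mhi n" unfolding mhi_def by (rule cSUP_upper[OF _ rho_bdd(2)]) simp

lemma step: "mlo n \<le> rho (Suc n) x" "rho (Suc n) x \<le> mhi n"
   "rho (Suc n) x - rho (Suc n) y \<le> eps * (mhi n - mlo n)"
proof -
  have a: "mlo n * hh n s \<le> hh (Suc n) s" for s
    using mlo_le[of n s] hh_pos[of n s] by (simp add: rho_def le_divide_eq)
  have b: "hh (Suc n) s \<le> mhi n * hh n s" for s
    using mhi_ge[of n s] hh_pos[of n s] by (simp add: rho_def divide_le_eq)
  note o = osc[OF hh_CP hh_CP hh_pos a b]
  show "mlo n \<le> rho (Suc n) x" "rho (Suc n) x \<le> mhi n"
    "rho (Suc n) x - rho (Suc n) y \<le> eps * (mhi n - mlo n)"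
    using o(1)[of x] o(2)[of x] o(3)[of x y] unfolding rho_def hh_Suc[symmetric] by auto
qed

lemma mono_lo: "mlo n \<le> mlo (Suc n)"
  unfolding mlo_def[of "Suc n"] by (rule cINF_greatest) (use step(1) in auto)
lemma mono_hi: "mhi (Suc n) \<le> mhi n"
  unfolding mhi_def[of "Suc n"] by (rule cSUP_least) (use step(2) in auto)
lemma D_step: "mhi (Suc n) - mlo (Suc n) \<le> eps * (mhi n - mlo n)"
proof -
  have "rho (Suc n) x - eps * (mhi n - mlo n) \<le> mlo (Suc n)" for x
    unfolding mlo_def[of "Suc n"]
  proof (rule cINF_greatest)
    fix y show "rho (Suc n) x - eps * (mhi n - mlo n) \<le> rho (Suc n) y" using step(3)[of n x y] by linarith
  qed simp
  then have "mhi (Suc n) \<le> mlo (Suc n) + eps * (mhi n - mlo n)"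
    unfolding mhi_def[of "Suc n"] by (intro cSUP_least) (auto simp: algebra_simps)
  then show ?thesis by simp
qed

lemma D_bound: "mhi n - mlo n \<le> (mhi 0 - mlo 0) * eps ^ n"
proof (induction n)
  case 0 then show ?case by simp
next
  case (Suc n)
  have "mhi (Suc n) - mlo (Suc n) \<le> eps * (mhi n - mlo n)" by (rule D_step)
  also have "\<dots> \<le> eps * ((mhi 0 - mlo 0) * eps ^ n)" using Suc eps_ge by (simp add: mult_left_mono)
  finally show ?case by (simp add: mult_ac)
qed

lemma m0_pos: "mlo 0 > 0"
proof -
  have "hh 1 0 / R \<le> mlo 0" unfolding mlo_def
  proof (rule cINF_greatest)
    fix y
    have "hh 1 0 \<le> R * hh 1 y" by (rule hh_ratio)
    then show "hh 1 0 / R \<le> rho 0 y" using R_ge1 by (simp add: rho_def hh_def divide_le_eq mult.commute)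
  qed simp
  moreover have "hh 1 0 / R > 0" using hh_pos[of 1 0] R_ge1 by simp
  ultimately show ?thesis by linarith
qed

lemma mlo_ge: "mlo 0 \<le> mlo n"
proof (induction n)
  case (Suc n) then show ?case using mono_lo[of n] by linarith
qed simp

definition D0 where "D0 = mhi 0 - mlo 0"
lemma D0_ge: "D0 \<ge> 0" unfolding D0_def using mlo_le[of 0 0] mhi_ge[of 0 0] by linarith

lemma rho_diff: "\<bar>rho n x - rho n y\<bar> \<le> D0 * eps ^ n"
  using mlo_le[of n x] mhi_ge[of n x] mlo_le[of n y] mhi_ge[of n y] D_bound[of n] unfolding D0_def by arith

lemma rho0_diff: "\<bar>rho (Suc n) 0 - rho n 0\<bar> \<le> D0 * eps ^ n"
  using mlo_le[of n 0] mhi_ge[of n 0] step(1,2)[of n 0] D_bound[of n] unfolding D0_def by arith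

definition ph where "ph n x = hh n x / hh n 0"

lemma ph_CP: "CP (ph n)"
proof -
  have "ph n = (\<lambda>x. (1 / hh n 0) * hh n x)" by (auto simp: ph_def[abs_def])
  then show ?thesis by (simp only:) (rule CP_mult[OF CP_const hh_CP])
qed

lemma ph_pos: "ph n x > 0" using hh_pos by (simp add: ph_def)
lemma ph_le: "ph n x \<le> R" using hh_ratio[of n x 0] hh_pos[of n 0] by (simp add: ph_def divide_le_eq)
lemma ph_0: "ph n 0 = 1" using hh_pos[of n 0] by (simp add: ph_def)

lemma ph_Suc: "ph (Suc n) x = ph n x * (rho n x / rho n 0)"
  using hh_pos[of n x] hh_pos[of n 0] hh_pos[of "Suc n" 0] by (simp add: ph_def rho_def field_simps)

definition CC where "CC = R * D0 / mlo 0"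

lemma ph_inc: "\<bar>ph (Suc n) x - ph n x\<bar> \<le> CC * eps ^ n"
proof -
  have r0: "rho n 0 \<ge> mlo 0" using mlo_le[of n 0] mlo_ge[of n] by linarith
  have "ph (Suc n) x - ph n x = ph n x * (rho n x - rho n 0) / rho n 0"
    unfolding ph_Suc using r0 m0_pos by (simp add: field_simps)
  also have "\<bar>\<dots>\<bar> = ph n x * \<bar>rho n x - rho n 0\<bar> / rho n 0"
    using ph_pos[of n x] r0 m0_pos by (simp add: abs_mult)
  also have "\<dots> \<le> R * (D0 * eps ^ n) / rho n 0"
    using ph_le[of n x] ph_pos[of n x] rho_diff[of n x 0] r0 m0_pos
    by (intro divide_right_mono mult_mono) auto
  also have "\<dots> \<le> R * (D0 * eps ^ n) / mlo 0"
    using r0 m0_pos R_ge1 D0_ge eps_ge by (intro divide_left_mono) auto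
  also have "\<dots> = CC * eps ^ n" by (simp add: CC_def)
  finally show ?thesis .
qed

end

context pot begin

lemma eigvec: "\<exists>\<Phi> \<mu>. CP \<Phi> \<and> \<mu> > 0 \<and> (\<forall>x. \<Phi> x > 0) \<and> K \<Phi> = (\<lambda>x. \<mu> * \<Phi> x)"
proof -
  define E1 where "E1 = CC / (1 - eps)"
  define E2 where "E2 = D0 / (1 - eps)"
  have E2_ge: "E2 \<ge> 0" unfolding E2_def using D0_ge eps_lt by simp
  have E1_ge: "E1 \<ge> 0" unfolding E1_def CC_def using D0_ge eps_lt R_ge1 m0_pos by simp
  obtain \<Phi> where Pcp: "CP \<Phi>" and Pb0: "\<forall>n x. \<bar>\<Phi> x - ph n x\<bar> \<le> CC * eps ^ n / (1 - eps)"
    using ulim_CP[OF ph_CP ph_inc eps_ge eps_lt] by blast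
  have Pb: "\<bar>\<Phi> x - ph n x\<bar> \<le> E1 * eps ^ n" for n x using Pb0 by (simp add: E1_def)
  obtain u where "CP u" and ub0: "\<forall>n x. \<bar>u x - (\<lambda>_. rho n 0) x\<bar> \<le> D0 * eps ^ n / (1 - eps)"
    using ulim_CP[where F="\<lambda>n _. rho n 0", OF CP_const rho0_diff eps_ge eps_lt] by blast
  define \<mu> where "\<mu> = u 0"
  have mb: "\<bar>\<mu> - rho n 0\<bar> \<le> E2 * eps ^ n" for n using ub0 by (simp add: E2_def \<mu>_def)
  have mu_ge: "mlo 0 \<le> \<mu>"
  proof -
    have "mlo 0 - \<mu> \<le> 0"
    proof (rule small_le[OF eps_ge eps_lt E2_ge])
      fix n have "mlo 0 \<le> rho n 0" using mlo_le[of n 0] mlo_ge[of n] by linarith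
      then show "mlo 0 - \<mu> \<le> E2 * eps ^ n" using mb[of n] by arith
    qed
    then show ?thesis by simp
  qed
  then have mu_pos: "\<mu> > 0" using m0_pos by linarith
  have P0: "\<Phi> 0 = 1"
  proof -
    have "\<Phi> 0 - 1 = 0"
    proof (rule small_zero[OF eps_ge eps_lt])
      fix n show "\<bar>\<Phi> 0 - 1\<bar> \<le> E1 * eps ^ n" using Pb[of 0 n] ph_0[of n] by simp
    qed
    then show ?thesis by simp
  qed
  have Pnn: "\<Phi> x \<ge> 0" for x
  proof -
    have "- \<Phi> x \<le> 0"
    proof (rule small_le[OF eps_ge eps_lt E1_ge])
      fix n show "- \<Phi> x \<le> E1 * eps ^ n" using Pb[of x n] ph_pos[of n x] by arith
    qed
    then show ?thesis by simp
  qed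
  have Kph: "K (ph n) x = rho n 0 * ph (Suc n) x" for n x
  proof -
    have "ph n = (\<lambda>s. (1 / hh n 0) * hh n s)" by (auto simp: ph_def[abs_def])
    then have "K (ph n) x = K (\<lambda>s. (1 / hh n 0) * hh n s) x" by (simp only:)
    also have "\<dots> = (1 / hh n 0) * hh (Suc n) x" unfolding K_scale[OF hh_CP] hh_Suc ..
    finally have "K (ph n) x = (1 / hh n 0) * hh (Suc n) x" .
    also have "\<dots> = rho n 0 * ph (Suc n) x"
      using hh_pos[of n 0] hh_pos[of "Suc n" 0] by (simp add: rho_def ph_def)
    finally show ?thesis .
  qed
  have KP: "K \<Phi> x = \<mu> * \<Phi> x" for x
  proof -
    have "\<bar>K \<Phi> x - \<mu> * \<Phi> x\<bar> \<le> (E1 + E2 * R + \<mu> * E1) * eps ^ n" for n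
    proof -
      have dcp: "CP (\<lambda>s. 1 * \<Phi> s + (- 1) * ph n s)" by (rule CP_lin[OF Pcp ph_CP])
      have "K (\<lambda>s. 1 * \<Phi> s + (- 1) * ph n s) x = K \<Phi> x - K (ph n) x"
        using K_lin[OF Pcp ph_CP, of 1 "- 1"] by simp
      moreover have "\<bar>K (\<lambda>s. 1 * \<Phi> s + (- 1) * ph n s) x\<bar> \<le> E1 * eps ^ n"
        by (rule K_bound[OF dcp]) (use Pb in simp)
      ultimately have t1: "\<bar>K \<Phi> x - K (ph n) x\<bar> \<le> E1 * eps ^ n" by simp
      have t2: "\<bar>rho n 0 - \<mu>\<bar> * ph (Suc n) x \<le> (E2 * eps ^ n) * R"
        using mb[of n] ph_le[of "Suc n" x] ph_pos[of "Suc n" x] E2_ge eps_ge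
        by (intro mult_mono) (auto simp: abs_minus_commute)
      have t3: "\<mu> * \<bar>ph (Suc n) x - \<Phi> x\<bar> \<le> \<mu> * (E1 * eps ^ n)"
      proof -
        have "\<bar>ph (Suc n) x - \<Phi> x\<bar> \<le> E1 * eps ^ Suc n" using Pb[of x "Suc n"] by (simp add: abs_minus_commute)
        also have "\<dots> \<le> E1 * eps ^ n"
        proof -
          have "eps * eps ^ n \<le> eps ^ n" using eps_ge eps_lt by (simp add: mult_left_le_one_le)
          then show ?thesis using E1_ge by (simp add: mult_left_mono)
        qed
        finally show ?thesis using mu_pos by simp
      qed
      have "rho n 0 * ph (Suc n) x - \<mu> * \<Phi> x = (rho n 0 - \<mu>) * ph (Suc n) x + \<mu> * (ph (Suc n) x - \<Phi> x)"
        by (simp add: algebra_simps)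
      then have "\<bar>rho n 0 * ph (Suc n) x - \<mu> * \<Phi> x\<bar> \<le> \<bar>rho n 0 - \<mu>\<bar> * ph (Suc n) x + \<mu> * \<bar>ph (Suc n) x - \<Phi> x\<bar>"
        using ph_pos[of "Suc n" x] mu_pos by (simp add: abs_mult abs_triangle_ineq[THEN order_trans])
      with t1 t2 t3 Kph[of n x] have "\<bar>K \<Phi> x - \<mu> * \<Phi> x\<bar> \<le> E1 * eps ^ n + E2 * eps ^ n * R + \<mu> * (E1 * eps ^ n)"
        by arith
      then show ?thesis by (simp add: algebra_simps)
    qed
    then have "K \<Phi> x - \<mu> * \<Phi> x = 0" by (rule small_zero[OF eps_ge eps_lt])
    then show ?thesis by simp
  qed
  have Ppos: "\<Phi> y > 0" for y
  proof -
    have "K \<Phi> 0 \<le> R * K \<Phi> y" by (rule K_ratio[OF Pcp Pnn])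
    then have "\<mu> \<le> R * (\<mu> * \<Phi> y)" using KP P0 by simp
    then have "0 < R * (\<mu> * \<Phi> y)" using mu_pos by linarith
    then show ?thesis using R_ge1 mu_pos by (simp add: zero_less_mult_iff)
  qed
  show ?thesis using Pcp mu_pos Ppos KP by blast
qed

lemma exists_eig: "\<exists>\<psi> lam. (\<forall>x. \<psi> x > 0) \<and> periodic_eigenfun q lam \<psi>"
proof -
  obtain \<Phi> \<mu> where Pcp: "CP \<Phi>" and mu: "\<mu> > 0" and Ppos: "\<forall>x. \<Phi> x > 0" and KP: "K \<Phi> = (\<lambda>x. \<mu> * \<Phi> x)"
    using eigvec by blast
  define h where "h = (\<lambda>s. \<Phi> s + V s * K \<Phi> s)"
  have PK: "\<Phi> = (\<lambda>x. K \<Phi> x / \<mu>)" using KP mu by (auto simp: fun_eq_iff)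
  have d1: "(\<Phi> has_real_derivative Gd aa h x / \<mu>) (at x)" for x
  proof -
    have "((\<lambda>x. K \<Phi> x / \<mu>) has_real_derivative Gd aa h x / \<mu>) (at x)"
      by (rule DERIV_cdivide) (use K_deriv(1)[OF Pcp, of x] in \<open>simp add: h_def\<close>)
    then show ?thesis using PK by simp
  qed
  have dP: "deriv \<Phi> = (\<lambda>x. Gd aa h x / \<mu>)" using d1 DERIV_imp_deriv by blast
  have d2: "(deriv \<Phi> has_real_derivative ((Q + 1 + q x) * K \<Phi> x - \<Phi> x) / \<mu>) (at x)" for x
    unfolding dP by (rule DERIV_cdivide) (use K_deriv(2)[OF Pcp, of x] in \<open>simp add: h_def\<close>)
  have ddP: "deriv (deriv \<Phi>) x = ((Q + 1 + q x) * K \<Phi> x - \<Phi> x) / \<mu>" for x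
    using d2 DERIV_imp_deriv by blast
  define lam where "lam = 1 / \<mu> - Q - 1"
  have "periodic_eigenfun q lam \<Phi>"
    unfolding periodic_eigenfun_def
  proof (intro conjI allI)
    fix x
    show "\<Phi> differentiable at x" using d1 real_differentiable_def by blast
    show "deriv \<Phi> differentiable at x" using d2 real_differentiable_def by blast
    show "- deriv (deriv \<Phi>) x + q x * \<Phi> x = lam * \<Phi> x"
      unfolding ddP KP lam_def using mu by (simp add: field_simps)
  next
    show "periodic1 \<Phi>" using Pcp by (simp add: CP_def)
  qed
  then show ?thesis using Ppos by blast
qed

end

lemma cont_of_deriv: "(\<And>x. (f has_real_derivative f' x) (at x)) \<Longrightarrow> continuous_on UNIV f"
  by (meson DERIV_isCont continuous_at_imp_continuous_on)

lemma deriv_periodic: assumes "periodic1 f" "\<And>x. (f has_real_derivative f' x) (at x)"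
  shows "periodic1 f'"
  unfolding periodic1_def
proof
  fix x
  have "((\<lambda>y. f (y + 1)) has_real_derivative f' (x + 1) * 1) (at x)"
    by (rule DERIV_chain2[where f=f and g="\<lambda>y. y + 1", OF assms(2)]) (auto intro!: derivative_eq_intros)
  moreover have "(\<lambda>y. f (y + 1)) = f" using assms(1) by (auto simp: periodic1_def)
  ultimately have "(f has_real_derivative f' (x + 1)) (at x)" by simp
  then show "f' (x + 1) = f' x" using assms(2)[of x] DERIV_unique by blast
qed

lemma per_int_zero: assumes "periodic1 F" "\<And>x. (F has_real_derivative F' x) (at x)"
  shows "integral {0..1} F' = 0"
proof -
  have "(F' has_integral (F 1 - F 0)) {0..1}" by (rule ftc_UNIV[OF assms(2)]) simp
  moreover have "F 1 = F 0" using assms(1) unfolding periodic1_def by (metis add_0)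
  ultimately show ?thesis by (simp add: integral_unique)
qed

lemma eig_reg: assumes "periodic_eigenfun q lam psi"
  shows "\<And>x. (psi has_real_derivative deriv psi x) (at x)"
        "\<And>x. (deriv psi has_real_derivative (q x - lam) * psi x) (at x)"
        "periodic1 psi" "periodic1 (deriv psi)"
        "continuous_on UNIV psi" "continuous_on UNIV (deriv psi)"
proof -
  have e1: "\<And>x. psi differentiable at x" and e2: "\<And>x. deriv psi differentiable at x"
    and e3: "periodic1 psi" and e4: "\<And>x. - deriv (deriv psi) x + q x * psi x = lam * psi x"
    using assms unfolding periodic_eigenfun_def by auto
  show d1: "(psi has_real_derivative deriv psi x) (at x)" for x
    using e1[of x] by (simp only: DERIV_deriv_iff_real_differentiable)
  have dd: "(deriv psi has_real_derivative deriv (deriv psi) x) (at x)" for x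
    using e2[of x] by (simp only: DERIV_deriv_iff_real_differentiable)
  have "deriv (deriv psi) x = (q x - lam) * psi x" for x
    using e4[of x] by (simp add: algebra_simps)
  then show d2: "(deriv psi has_real_derivative (q x - lam) * psi x) (at x)" for x
    using dd[of x] by simp
  show "periodic1 psi" by (rule e3)
  show "periodic1 (deriv psi)" by (rule deriv_periodic[OF e3 d1])
  show "continuous_on UNIV psi" by (rule cont_of_deriv[OF d1])
  show "continuous_on UNIV (deriv psi)" by (rule cont_of_deriv[OF d2])
qed

lemma picone:
  assumes qc: "continuous_on UNIV q" and eig: "periodic_eigenfun q lam psi" and pos: "\<And>x. psi x > 0"
    and phid: "\<And>x. (phi has_real_derivative phi' x) (at x)" and phic: "continuous_on UNIV phi'"
    and pp: "periodic1 phi"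
  shows "integral {0..1} (\<lambda>x. phi' x * phi' x + (q x - lam) * (phi x * phi x)) \<ge> 0"
proof -
  note r = eig_reg[OF eig]
  define p where "p x = deriv psi x / psi x" for x
  have nz: "\<forall>x\<in>UNIV. psi x \<noteq> 0" using pos by (metis less_irrefl)
  have pc: "continuous_on UNIV p" unfolding p_def[abs_def] by (rule continuous_on_divide[OF r(6) r(5) nz])
  have pp': "periodic1 p" using r(3,4) by (simp add: periodic1_def p_def)
  have pd: "(p has_real_derivative ((q x - lam) - p x * p x)) (at x)" for x
  proof -
    have "(p has_real_derivative ((q x - lam) * psi x * psi x - deriv psi x * deriv psi x) / (psi x * psi x)) (at x)"
      unfolding p_def[abs_def] using DERIV_divide[OF r(2) r(1) nz[rule_format]] by simp
    moreover have "((q x - lam) * psi x * psi x - deriv psi x * deriv psi x) / (psi x * psi x) = (q x - lam) - p x * p x"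
      unfolding p_def using pos[of x] by (simp add: field_simps)
    ultimately show ?thesis by simp
  qed
  have phc: "continuous_on UNIV phi" by (rule cont_of_deriv[OF phid])
  define W' where "W' x = ((q x - lam) - p x * p x) * (phi x * phi x) + p x * (phi' x * phi x + phi x * phi' x)" for x
  have Wd: "((\<lambda>x. p x * (phi x * phi x)) has_real_derivative W' x) (at x)" for x
  proof -
    have "((\<lambda>x. p x * (phi x * phi x)) has_real_derivative ((q x - lam) - p x * p x) * (phi x * phi x) + (phi' x * phi x + phi' x * phi x) * p x) (at x)"
      by (rule DERIV_mult[OF pd DERIV_mult[OF phid phid]])
    moreover have "((q x - lam) - p x * p x) * (phi x * phi x) + (phi' x * phi x + phi' x * phi x) * p x = W' x"
      by (simp add: W'_def algebra_simps)
    ultimately show ?thesis by simp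
  qed
  have Wp: "periodic1 (\<lambda>x. p x * (phi x * phi x))" using pp pp' by (simp add: periodic1_def)
  have W0: "integral {0..1} W' = 0" by (rule per_int_zero[OF Wp Wd])
  define S where "S x = (phi' x - p x * phi x) * (phi' x - p x * phi x)" for x
  have eq: "phi' x * phi' x + (q x - lam) * (phi x * phi x) = S x + W' x" for x
    unfolding S_def W'_def by (simp add: algebra_simps)
  have Wc: "continuous_on UNIV W'" unfolding W'_def[abs_def] by (intro continuous_intros qc pc phc phic)
  have Sc: "continuous_on UNIV S" unfolding S_def[abs_def] by (intro continuous_intros pc phc phic)
  have "integral {0..1} (\<lambda>x. phi' x * phi' x + (q x - lam) * (phi x * phi x)) = integral {0..1} S + integral {0..1} W'"
    unfolding eq by (rule Henstock_Kurzweil_Integration.integral_add[OF intg[OF Sc] intg[OF Wc]])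
  moreover have "integral {0..1} S \<ge> 0" by (rule integral_nonneg[OF intg[OF Sc]]) (simp add: S_def)
  ultimately show ?thesis using W0 by simp
qed

lemma energy:
  assumes qc: "continuous_on UNIV q" and eig: "periodic_eigenfun q mu phi"
  shows "integral {0..1} (\<lambda>x. deriv phi x * deriv phi x + (q x - mu) * (phi x * phi x)) = 0"
proof -
  note r = eig_reg[OF eig]
  have d: "((\<lambda>x. phi x * deriv phi x) has_real_derivative deriv phi x * deriv phi x + (q x - mu) * (phi x * phi x)) (at x)" for x
  proof -
    have "((\<lambda>x. phi x * deriv phi x) has_real_derivative phi x * ((q x - mu) * phi x) + deriv phi x * deriv phi x) (at x)"
      by (rule DERIV_mult'[OF r(1) r(2)])
    moreover have "phi x * ((q x - mu) * phi x) + deriv phi x * deriv phi x = deriv phi x * deriv phi x + (q x - mu) * (phi x * phi x)"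
      by (simp add: algebra_simps)
    ultimately show ?thesis by simp
  qed
  have p: "periodic1 (\<lambda>x. phi x * deriv phi x)" using r(3,4) by (simp add: periodic1_def)
  show ?thesis by (rule per_int_zero[OF p d])
qed

lemma sq_int_pos: assumes "continuous_on UNIV phi" "periodic1 phi" "phi x0 \<noteq> 0"
  shows "integral {0..1} (\<lambda>x. phi x * phi x) > 0"
proof -
  define y where "y = x0 - real_of_int \<lfloor>x0\<rfloor>"
  have y01: "y \<in> cbox 0 1" unfolding y_def using frac_lt_1[of x0] frac_ge_0[of x0] by (auto simp: frac_def)
  have py: "phi y \<noteq> 0" using per_frac[OF assms(2), of x0] assms(3) by (simp add: y_def)
  have c: "continuous_on UNIV (\<lambda>x. phi x * phi x)" by (intro continuous_intros assms(1))
  have ge: "integral {0..1} (\<lambda>x. phi x * phi x) \<ge> 0" by (rule integral_nonneg[OF intg[OF c]]) simp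
  have "integral {0..1} (\<lambda>x. phi x * phi x) \<noteq> 0"
  proof
    assume z: "integral {0..1} (\<lambda>x. phi x * phi x) = 0"
    have hi: "((\<lambda>x. phi x * phi x) has_integral 0) (cbox 0 1)"
      using integrable_integral[OF intg[OF c, of 0 1]] z by simp
    have "(\<lambda>x. phi x * phi x) y = 0"
      by (rule has_integral_0_cbox_imp_0[where f="\<lambda>x. phi x * phi x", OF continuous_on_subset[OF c subset_UNIV] _ hi _ y01]) auto
    then show False using py by simp
  qed
  with ge show ?thesis by linarith
qed

lemma cmp:
  fixes q1 q2 phi phi' :: "real \<Rightarrow> real"
  assumes c_q1: "continuous_on UNIV q1" and c_q2: "continuous_on UNIV q2"
    and c_phi: "continuous_on UNIV phi" and c_phi': "continuous_on UNIV phi'"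
    and A: "integral {0..1} (\<lambda>x. phi' x * phi' x + (q1 x - l1) * (phi x * phi x)) \<ge> 0"
    and B: "integral {0..1} (\<lambda>x. phi' x * phi' x + (q2 x - l2) * (phi x * phi x)) = 0"
    and L: "\<And>x. q1 x - q2 x \<le> L"
    and P: "integral {0..1} (\<lambda>x. phi x * phi x) > 0"
  shows "l1 - l2 \<le> L"
proof -
  define f1 where "f1 x = phi' x * phi' x + (q1 x - l1) * (phi x * phi x)" for x
  define f2 where "f2 x = phi' x * phi' x + (q2 x - l2) * (phi x * phi x)" for x
  define g where "g x = phi x * phi x" for x
  have c1: "continuous_on UNIV f1" unfolding f1_def[abs_def]
    by (intro continuous_on_add continuous_on_mult continuous_on_diff continuous_on_const c_q1 c_phi c_phi')
  have c2: "continuous_on UNIV f2" unfolding f2_def[abs_def]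
    by (intro continuous_on_add continuous_on_mult continuous_on_diff continuous_on_const c_q2 c_phi c_phi')
  have cg: "continuous_on UNIV g" unfolding g_def[abs_def]
    by (intro continuous_on_mult c_phi)
  have c3: "continuous_on UNIV (\<lambda>x. (L + l2 - l1) * g x)" by (intro continuous_on_mult continuous_on_const cg)
  have c4: "continuous_on UNIV (\<lambda>x. f1 x - f2 x)" by (intro continuous_on_diff c1 c2)
  have "0 \<le> integral {0..1} f1 - integral {0..1} f2"
    using A B unfolding f1_def[abs_def] f2_def[abs_def] by simp
  also have "\<dots> = integral {0..1} (\<lambda>x. f1 x - f2 x)"
    by (rule Henstock_Kurzweil_Integration.integral_diff[OF intg[OF c1] intg[OF c2], symmetric])
  also have "\<dots> \<le> integral {0..1} (\<lambda>x. (L + l2 - l1) * g x)"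
  proof (rule Henstock_Kurzweil_Integration.integral_le[OF intg[OF c4] intg[OF c3]])
    fix x
    have gx: "g x \<ge> 0" unfolding g_def by simp
    have "f1 x - f2 x = (q1 x - q2 x + l2 - l1) * g x" unfolding f1_def f2_def g_def by (simp add: algebra_simps)
    also have "\<dots> \<le> (L + l2 - l1) * g x" using L[of x] gx by (intro mult_right_mono) auto
    finally show "f1 x - f2 x \<le> (L + l2 - l1) * g x" .
  qed
  also have "\<dots> = (L + l2 - l1) * integral {0..1} g" by simp
  finally have "0 \<le> (L + l2 - l1) * integral {0..1} g" .
  moreover have "integral {0..1} g > 0" using P unfolding g_def[abs_def] .
  ultimately have "0 \<le> L + l2 - l1"
  proof -
    assume a1: "0 \<le> (L + l2 - l1) * integral {0..1} g" and a2: "integral {0..1} g > 0"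
    show ?thesis
    proof (rule ccontr)
      assume "\<not> 0 \<le> L + l2 - l1"
      then have "L + l2 - l1 < 0" by simp
      from mult_neg_pos[OF this a2] a1 show False by linarith
    qed
  qed
  then show ?thesis by simp
qed

lemma eig_min: assumes qc: "continuous_on UNIV q" and eig: "periodic_eigenfun q lam psi"
  and pos: "\<And>x. psi x > 0" and ev: "periodic_eigenvalue q mu"
  shows "lam \<le> mu"
proof -
  obtain phi x0 where nz: "phi x0 \<noteq> 0" and ephi: "periodic_eigenfun q mu phi"
    using ev unfolding periodic_eigenvalue_def by blast
  note r = eig_reg[OF ephi]
  have A: "integral {0..1} (\<lambda>x. deriv phi x * deriv phi x + (q x - lam) * (phi x * phi x)) \<ge> 0"
    by (rule picone[OF qc eig pos r(1) r(6) r(3)])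
  have B: "integral {0..1} (\<lambda>x. deriv phi x * deriv phi x + (q x - mu) * (phi x * phi x)) = 0"
    by (rule energy[OF qc ephi])
  have P: "integral {0..1} (\<lambda>x. phi x * phi x) > 0" by (rule sq_int_pos[OF r(5) r(3) nz])
  have "lam - mu \<le> 0" by (rule cmp[OF qc qc r(5) r(6) A B _ P]) simp
  then show ?thesis by simp
qed

lemma ground_exists: assumes "continuous_on UNIV q" "periodic1 q" shows "\<exists>psi. ground_state q psi"
proof -
  obtain Q where Q: "\<forall>x. \<bar>q x\<bar> \<le> Q" using CP_bounded[OF assms] by blast
  interpret pot q Q using assms Q by unfold_locales (auto simp: CP_def)
  obtain psi lam where pos: "\<forall>x. psi x > 0" and e: "periodic_eigenfun q lam psi" using exists_eig by blast
  have "\<forall>mu. periodic_eigenvalue q mu \<longrightarrow> lam \<le> mu"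
    using eig_min[OF assms(1) e] pos by blast
  then have "ground_state q psi" unfolding ground_state_def using e pos by blast
  then show ?thesis by blast
qed

lemma Linf_ge: assumes "continuous_on UNIV f" "periodic1 f" shows "\<bar>f x\<bar> \<le> Linf f"
proof -
  obtain B where B: "\<forall>x. \<bar>f x\<bar> \<le> B" using CP_bounded[OF assms] by blast
  have "bdd_above (range (\<lambda>x. \<bar>f x\<bar>))"
  proof (rule bdd_aboveI[where M=B])
    fix y assume "y \<in> range (\<lambda>x. \<bar>f x\<bar>)"
    then obtain x where "y = \<bar>f x\<bar>" by blast
    then show "y \<le> B" using B by simp
  qed
  then show ?thesis unfolding Linf_def by (rule cSUP_upper[rotated]) simp
qed

lemma Phi_char: assumes "q \<in> H"
  shows "\<exists>lam psi. Phi q = - lam \<and> (\<forall>x. psi x > 0) \<and> periodic_eigenfun q lam psi"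
proof -
  have qc: "continuous_on UNIV q" and qp: "periodic1 q" and q0: "integral {0..1} q = 0"
    using assms unfolding H_def by auto
  define psi where "psi = (SOME psi. ground_state q psi)"
  have "ground_state q psi" unfolding psi_def by (rule someI_ex[OF ground_exists[OF qc qp]])
  then obtain lam where e: "periodic_eigenfun q lam psi" and pos: "\<And>x. psi x > 0"
    unfolding ground_state_def by blast
  note r = eig_reg[OF e]
  define p where "p x = deriv psi x / psi x" for x
  have nz: "\<forall>x\<in>UNIV. psi x \<noteq> 0" using pos by (metis less_irrefl)
  have pc: "continuous_on UNIV p" unfolding p_def[abs_def] by (rule continuous_on_divide[OF r(6) r(5) nz])
  have pp: "periodic1 p" using r(3,4) by (simp add: periodic1_def p_def)
  have pd: "(p has_real_derivative ((q x - lam) - p x * p x)) (at x)" for x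
  proof -
    have "(p has_real_derivative ((q x - lam) * psi x * psi x - deriv psi x * deriv psi x) / (psi x * psi x)) (at x)"
      unfolding p_def[abs_def] using DERIV_divide[OF r(2) r(1) nz[rule_format]] by simp
    moreover have "((q x - lam) * psi x * psi x - deriv psi x * deriv psi x) / (psi x * psi x) = (q x - lam) - p x * p x"
      unfolding p_def using pos[of x] by (simp add: field_simps)
    ultimately show ?thesis by simp
  qed
  have z: "integral {0..1} (\<lambda>x. (q x - lam) - p x * p x) = 0" by (rule per_int_zero[OF pp pd])
  have cq: "continuous_on UNIV (\<lambda>x. q x - lam)" by (intro continuous_on_diff qc continuous_on_const)
  have cpp: "continuous_on UNIV (\<lambda>x. p x * p x)" by (intro continuous_on_mult pc)
  have "integral {0..1} (\<lambda>x. (q x - lam) - p x * p x) = integral {0..1} (\<lambda>x. q x - lam) - integral {0..1} (\<lambda>x. p x * p x)"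
    by (rule Henstock_Kurzweil_Integration.integral_diff[OF intg[OF cq] intg[OF cpp]])
  moreover have "integral {0..1} (\<lambda>x. q x - lam) = integral {0..1} q - integral {0..1::real} (\<lambda>x. lam)"
    by (rule Henstock_Kurzweil_Integration.integral_diff[OF intg[OF qc] intg[OF continuous_on_const]])
  moreover have "integral {0..1::real} (\<lambda>x. lam) = lam" by simp
  ultimately have I: "integral {0..1} (\<lambda>x. p x * p x) = - lam" using z q0 by simp
  have "Phi q = integral {0..1} (\<lambda>x. p x * p x)"
    unfolding Phi_def Let_def psi_def[symmetric] p_def by (simp add: power2_eq_square)
  then have "Phi q = - lam" using I by simp
  then show ?thesis using pos e by blast
qed

theorem lemma2:
  shows "(\<forall>q\<in>H. \<bar>Phi q\<bar> \<le> Linf q) \<and>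
         (\<forall>q1\<in>H. \<forall>q2\<in>H. \<bar>Phi q1 - Phi q2\<bar> \<le> Linf (\<lambda>x. q1 x - q2 x))"
proof (intro conjI ballI)
  fix q assume qH: "q \<in> H"
  have qc: "continuous_on UNIV q" and qp: "periodic1 q" and q0: "integral {0..1} q = 0"
    using qH unfolding H_def by auto
  obtain lam psi where Pq: "Phi q = - lam" and pos: "\<And>x. psi x > 0" and e: "periodic_eigenfun q lam psi"
    using Phi_char[OF qH] by blast
  note r = eig_reg[OF e]
  have up: "lam \<le> 0"
  proof -
    have d1: "((\<lambda>_. 1) has_real_derivative 0) (at x)" for x :: real by simp
    have "integral {0..1} (\<lambda>x. 0 * 0 + (q x - lam) * (1 * 1)) \<ge> 0"
      by (rule picone[OF qc e pos d1 continuous_on_const]) (simp add: periodic1_def)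
    moreover have "integral {0..1} (\<lambda>x. 0 * 0 + (q x - lam) * (1 * 1)) = integral {0..1} q - integral {0..1::real} (\<lambda>x. lam)"
      using Henstock_Kurzweil_Integration.integral_diff[OF intg[OF qc] intg[OF continuous_on_const]] by simp
    ultimately show ?thesis using q0 by simp
  qed
  have lo: "0 - lam \<le> Linf q"
  proof (rule cmp[OF continuous_on_const qc r(5) r(6) _ energy[OF qc e]])
    show "0 \<le> integral {0..1} (\<lambda>x. deriv psi x * deriv psi x + (0 - 0) * (psi x * psi x))"
      by (rule integral_nonneg[OF intg]) (auto intro!: continuous_intros r(6))
    fix x show "0 - q x \<le> Linf q" using Linf_ge[OF qc qp, of x] by simp
  next
    show "integral {0..1} (\<lambda>x. psi x * psi x) > 0" using sq_int_pos[OF r(5) r(3), of 0] pos[of 0] by simp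
  qed
  show "\<bar>Phi q\<bar> \<le> Linf q" using up lo Pq by simp
next
  fix q1 q2 assume q1H: "q1 \<in> H" and q2H: "q2 \<in> H"
  have qc1: "continuous_on UNIV q1" and qp1: "periodic1 q1" using q1H unfolding H_def by auto
  have qc2: "continuous_on UNIV q2" and qp2: "periodic1 q2" using q2H unfolding H_def by auto
  obtain l1 psi1 where P1: "Phi q1 = - l1" and pos1: "\<And>x. psi1 x > 0" and e1: "periodic_eigenfun q1 l1 psi1"
    using Phi_char[OF q1H] by blast
  obtain l2 psi2 where P2: "Phi q2 = - l2" and pos2: "\<And>x. psi2 x > 0" and e2: "periodic_eigenfun q2 l2 psi2"
    using Phi_char[OF q2H] by blast
  note r1 = eig_reg[OF e1]
  note r2 = eig_reg[OF e2]
  define L where "L = Linf (\<lambda>x. q1 x - q2 x)"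
  have dc: "continuous_on UNIV (\<lambda>x. q1 x - q2 x)" by (intro continuous_on_diff qc1 qc2)
  have dp: "periodic1 (\<lambda>x. q1 x - q2 x)" using qp1 qp2 by (simp add: periodic1_def)
  have Lb: "\<bar>q1 x - q2 x\<bar> \<le> L" for x unfolding L_def using Linf_ge[OF dc dp, of x] by simp
  have a: "l1 - l2 \<le> L"
  proof (rule cmp[OF qc1 qc2 r2(5) r2(6) picone[OF qc1 e1 pos1 r2(1) r2(6) r2(3)] energy[OF qc2 e2]])
    fix x show "q1 x - q2 x \<le> L" using Lb[of x] by simp
  next
    show "integral {0..1} (\<lambda>x. psi2 x * psi2 x) > 0" using sq_int_pos[OF r2(5) r2(3), of 0] pos2[of 0] by simp
  qed
  have b: "l2 - l1 \<le> L"
  proof (rule cmp[OF qc2 qc1 r1(5) r1(6) picone[OF qc2 e2 pos2 r1(1) r1(6) r1(3)] energy[OF qc1 e1]])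
    fix x show "q2 x - q1 x \<le> L" using Lb[of x] by simp
  next
    show "integral {0..1} (\<lambda>x. psi1 x * psi1 x) > 0" using sq_int_pos[OF r1(5) r1(3), of 0] pos1[of 0] by simp
  qed
  show "\<bar>Phi q1 - Phi q2\<bar> \<le> Linf (\<lambda>x. q1 x - q2 x)" using a b P1 P2 unfolding L_def[symmetric] by simp
qed

end
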